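(* Let $T$ be a complete theory with monster model $\mathcal{U}$, $\mu\in\mathfrak{M}_x(\mathcal{U})$, $\nu\in\mathfrak{M}_y(\mathcal{U})$. If $\mu\geq_{\mathbb{E}}\nu$ and $\mu$ is smooth, then $\nu$ is smooth.
   Context: For $C\subseteq\mathcal{U}$, $\mathcal{L}_x(C)$ is the Boolean algebra of formulas in $x$ with parameters from $C$ modulo $T$, embedded in $\mathcal{L}_{xy}(C)$ via $\varphi(x)\mapsto\varphi(x)\wedge y=y$; $\mathfrak{M}_x(C)$ is the set of finitely additive probability measures on $\mathcal{L}_x(C)$. For $\omega\in\mathfrak{M}_{xy}(C)$, $\pi_x(\omega)(\varphi(x))=\omega(\varphi(x)\wedge y=y)$ (similarly $\pi_y$); $\omega|_D$ is restriction. For small $A$, $\mu\geq_{\mathbb{E},A}\nu$ means there is $\lambda\in\mathfrak{M}_{xy}(A)$ with $\pi_x(\lambda)=\mu|_A$ such that every $\omega\in\mathfrak{M}_{xy}(\mathcal{U})$ with $\omega|_A=\lambda$ and $\pi_x(\omega)=\mu$ satisfies $\pi_y(\omega)=\nu$; $\mu\geq_{\mathbb{E}}\nu$ means this for some small $A$. A global measure is smooth over $A$ if it is the unique global measure (in its variables) with its restriction to $A$; it is smooth if smooth over some small $A$. *)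

theory Defs
  imports Complex_Main
begin

text \<open>A first-order language with relation symbols of type 'r and function symbols
of type 'f (arities are implicit: a symbol may be applied to argument lists of any
length, which is equivalent to having one symbol per arity).  Terms and formulas
may contain parameters (elements of type 'a, the carrier type of the structure).\<close>

datatype ('f, 'a) trm = Var nat | Par 'a | Fn 'f "('f, 'a) trm list"

datatype ('r, 'f, 'a) fm =
    Eq "('f, 'a) trm" "('f, 'a) trm"
  | Rl 'r "('f, 'a) trm list"
  | Neg "('r, 'f, 'a) fm"
  | Conj "('r, 'f, 'a) fm" "('r, 'f, 'a) fm"
  | Ex nat "('r, 'f, 'a) fm"

fun tparams :: "('f, 'a) trm \<Rightarrow> 'a set" where
  "tparams (Var i) = {}"
| "tparams (Par a) = {a}"
| "tparams (Fn f ts) = (\<Union>t\<in>set ts. tparams t)"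

fun tvars :: "('f, 'a) trm \<Rightarrow> nat set" where
  "tvars (Var i) = {i}"
| "tvars (Par a) = {}"
| "tvars (Fn f ts) = (\<Union>t\<in>set ts. tvars t)"

fun params :: "('r, 'f, 'a) fm \<Rightarrow> 'a set" where
  "params (Eq s t) = tparams s \<union> tparams t"
| "params (Rl r ts) = (\<Union>t\<in>set ts. tparams t)"
| "params (Neg p) = params p"
| "params (Conj p q) = params p \<union> params q"
| "params (Ex i p) = params p"

fun fv :: "('r, 'f, 'a) fm \<Rightarrow> nat set" where
  "fv (Eq s t) = tvars s \<union> tvars t"
| "fv (Rl r ts) = (\<Union>t\<in>set ts. tvars t)"
| "fv (Neg p) = fv p"
| "fv (Conj p q) = fv p \<union> fv q"
| "fv (Ex i p) = fv p - {i}"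

fun evt :: "('f \<Rightarrow> 'a list \<Rightarrow> 'a) \<Rightarrow> (nat \<Rightarrow> 'a) \<Rightarrow> ('f, 'a) trm \<Rightarrow> 'a" where
  "evt fn e (Var i) = e i"
| "evt fn e (Par a) = a"
| "evt fn e (Fn f ts) = fn f (map (evt fn e) ts)"

fun sat :: "'a set \<Rightarrow> ('r \<Rightarrow> 'a list \<Rightarrow> bool) \<Rightarrow> ('f \<Rightarrow> 'a list \<Rightarrow> 'a)
            \<Rightarrow> (nat \<Rightarrow> 'a) \<Rightarrow> ('r, 'f, 'a) fm \<Rightarrow> bool" where
  "sat U rel fn e (Eq s t) = (evt fn e s = evt fn e t)"
| "sat U rel fn e (Rl r ts) = rel r (map (evt fn e) ts)"
| "sat U rel fn e (Neg p) = (\<not> sat U rel fn e p)"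
| "sat U rel fn e (Conj p q) = (sat U rel fn e p \<and> sat U rel fn e q)"
| "sat U rel fn e (Ex i p) = (\<exists>a\<in>U. sat U rel fn (e(i := a)) p)"

definition is_structure :: "'a set \<Rightarrow> ('f \<Rightarrow> 'a list \<Rightarrow> 'a) \<Rightarrow> bool" where
  "is_structure U fn \<longleftrightarrow> U \<noteq> {} \<and> (\<forall>f xs. set xs \<subseteq> U \<longrightarrow> fn f xs \<in> U)"

definition small :: "'k rel \<Rightarrow> 'a set \<Rightarrow> 'a set \<Rightarrow> bool" where
  "small \<kappa> U A \<longleftrightarrow> A \<subseteq> U \<and> (card_of A, \<kappa>) \<in> ordLess"

definition saturated ::
  "'k rel \<Rightarrow> 'a set \<Rightarrow> ('r \<Rightarrow> 'a list \<Rightarrow> bool) \<Rightarrow> ('f \<Rightarrow> 'a list \<Rightarrow> 'a) \<Rightarrow> bool" where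
  "saturated \<kappa> U rel fn \<longleftrightarrow>
     (\<forall>A (p :: ('r, 'f, 'a) fm set). small \<kappa> U A
        \<and> (\<forall>\<phi>\<in>p. params \<phi> \<subseteq> A \<and> fv \<phi> \<subseteq> {0})
        \<and> (\<forall>F. F \<subseteq> p \<and> finite F \<longrightarrow> (\<exists>a\<in>U. \<forall>\<phi>\<in>F. sat U rel fn (\<lambda>_. a) \<phi>))
        \<longrightarrow> (\<exists>a\<in>U. \<forall>\<phi>\<in>p. sat U rel fn (\<lambda>_. a) \<phi>))"

definition automorphism ::
  "'a set \<Rightarrow> ('r \<Rightarrow> 'a list \<Rightarrow> bool) \<Rightarrow> ('f \<Rightarrow> 'a list \<Rightarrow> 'a) \<Rightarrow> ('a \<Rightarrow> 'a) \<Rightarrow> bool" where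
  "automorphism U rel fn \<sigma> \<longleftrightarrow> bij_betw \<sigma> U U
     \<and> (\<forall>r xs. set xs \<subseteq> U \<longrightarrow> rel r (map \<sigma> xs) = rel r xs)
     \<and> (\<forall>f xs. set xs \<subseteq> U \<longrightarrow> fn f (map \<sigma> xs) = \<sigma> (fn f xs))"

definition elementary_on ::
  "'a set \<Rightarrow> ('r \<Rightarrow> 'a list \<Rightarrow> bool) \<Rightarrow> ('f \<Rightarrow> 'a list \<Rightarrow> 'a) \<Rightarrow> 'a set \<Rightarrow> ('a \<Rightarrow> 'a) \<Rightarrow> bool" where
  "elementary_on U rel fn A g \<longleftrightarrow> g ` A \<subseteq> U \<and>
     (\<forall>(\<phi> :: ('r, 'f, 'a) fm) e. params \<phi> = {} \<and> range e \<subseteq> A \<longrightarrow>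
        (sat U rel fn e \<phi> \<longleftrightarrow> sat U rel fn (g \<circ> e) \<phi>))"

definition strongly_homogeneous ::
  "'k rel \<Rightarrow> 'a set \<Rightarrow> ('r \<Rightarrow> 'a list \<Rightarrow> bool) \<Rightarrow> ('f \<Rightarrow> 'a list \<Rightarrow> 'a) \<Rightarrow> bool" where
  "strongly_homogeneous \<kappa> U rel fn \<longleftrightarrow>
     (\<forall>A g. small \<kappa> U A \<and> elementary_on U rel fn A g \<longrightarrow>
        (\<exists>\<sigma>. automorphism U rel fn \<sigma> \<and> (\<forall>a\<in>A. \<sigma> a = g a)))"

definition monster ::
  "'k rel \<Rightarrow> 'a set \<Rightarrow> ('r \<Rightarrow> 'a list \<Rightarrow> bool) \<Rightarrow> ('f \<Rightarrow> 'a list \<Rightarrow> 'a) \<Rightarrow> bool" where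
  "monster \<kappa> U rel fn \<longleftrightarrow>
     Card_order \<kappa> \<and> (natLeq, \<kappa>) \<in> ordLeq \<and> (card_of (UNIV :: 'r set), \<kappa>) \<in> ordLess
     \<and> (card_of (UNIV :: 'f set), \<kappa>) \<in> ordLess
     \<and> is_structure U fn \<and> saturated \<kappa> U rel fn \<and> strongly_homogeneous \<kappa> U rel fn"

definition tuples :: "'a set \<Rightarrow> nat \<Rightarrow> 'a list set" where
  "tuples U n = {v. length v = n \<and> set v \<subseteq> U}"

definition dset ::
  "'a set \<Rightarrow> ('r \<Rightarrow> 'a list \<Rightarrow> bool) \<Rightarrow> ('f \<Rightarrow> 'a list \<Rightarrow> 'a) \<Rightarrow> nat \<Rightarrow> ('r, 'f, 'a) fm \<Rightarrow> 'a list set" where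
  "dset U rel fn n \<phi> = {v \<in> tuples U n. sat U rel fn (\<lambda>i. v ! i) \<phi>}"

text \<open>L_x(C) for |x| = n: formulas in x with parameters from C modulo T, represented by
the subsets of U^n they define (in the monster model, equivalence modulo T coincides
with defining the same set).\<close>
definition LL ::
  "'a set \<Rightarrow> ('r \<Rightarrow> 'a list \<Rightarrow> bool) \<Rightarrow> ('f \<Rightarrow> 'a list \<Rightarrow> 'a) \<Rightarrow> 'a set \<Rightarrow> nat \<Rightarrow> 'a list set set" where
  "LL U rel fn C n = {dset U rel fn n \<phi> | \<phi>. params \<phi> \<subseteq> C \<and> fv \<phi> \<subseteq> {..<n}}"

text \<open>Finitely additive probability measures on a Boolean algebra B of subsets of S,
normalised to be 0 outside B (so that measures on B are plain functions).\<close>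
definition fa_prob :: "'b set set \<Rightarrow> 'b set \<Rightarrow> ('b set \<Rightarrow> real) \<Rightarrow> bool" where
  "fa_prob B S \<mu> \<longleftrightarrow> \<mu> S = 1 \<and> (\<forall>D\<in>B. 0 \<le> \<mu> D)
     \<and> (\<forall>D\<in>B. \<forall>E\<in>B. D \<inter> E = {} \<longrightarrow> \<mu> (D \<union> E) = \<mu> D + \<mu> E)
     \<and> (\<forall>D. D \<notin> B \<longrightarrow> \<mu> D = 0)"

definition MM ::
  "'a set \<Rightarrow> ('r \<Rightarrow> 'a list \<Rightarrow> bool) \<Rightarrow> ('f \<Rightarrow> 'a list \<Rightarrow> 'a) \<Rightarrow> 'a set \<Rightarrow> nat \<Rightarrow> ('a list set \<Rightarrow> real) set" where
  "MM U rel fn C n = {\<mu>. fa_prob (LL U rel fn C n) (tuples U n) \<mu>}"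

definition restr :: "'b set set \<Rightarrow> ('b set \<Rightarrow> real) \<Rightarrow> 'b set \<Rightarrow> real" where
  "restr B \<mu> = (\<lambda>D. if D \<in> B then \<mu> D else 0)"

text \<open>Variables: x = first n coordinates, y = last m coordinates of xy (length n+m).
The embeddings phi(x) |-> phi(x) /\ y = y and psi(y) |-> x = x /\ psi(y).\<close>
definition ext_x :: "'a set \<Rightarrow> nat \<Rightarrow> nat \<Rightarrow> 'a list set \<Rightarrow> 'a list set" where
  "ext_x U n m D = {v \<in> tuples U (n + m). take n v \<in> D}"

definition ext_y :: "'a set \<Rightarrow> nat \<Rightarrow> nat \<Rightarrow> 'a list set \<Rightarrow> 'a list set" where
  "ext_y U n m D = {v \<in> tuples U (n + m). drop n v \<in> D}"

definition pi_x ::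
  "'a set \<Rightarrow> ('r \<Rightarrow> 'a list \<Rightarrow> bool) \<Rightarrow> ('f \<Rightarrow> 'a list \<Rightarrow> 'a) \<Rightarrow> 'a set \<Rightarrow> nat \<Rightarrow> nat
     \<Rightarrow> ('a list set \<Rightarrow> real) \<Rightarrow> 'a list set \<Rightarrow> real" where
  "pi_x U rel fn C n m \<omega> = (\<lambda>D. if D \<in> LL U rel fn C n then \<omega> (ext_x U n m D) else 0)"

definition pi_y ::
  "'a set \<Rightarrow> ('r \<Rightarrow> 'a list \<Rightarrow> bool) \<Rightarrow> ('f \<Rightarrow> 'a list \<Rightarrow> 'a) \<Rightarrow> 'a set \<Rightarrow> nat \<Rightarrow> nat
     \<Rightarrow> ('a list set \<Rightarrow> real) \<Rightarrow> 'a list set \<Rightarrow> real" where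
  "pi_y U rel fn C n m \<omega> = (\<lambda>D. if D \<in> LL U rel fn C m then \<omega> (ext_y U n m D) else 0)"

definition E_above_over ::
  "'a set \<Rightarrow> ('r \<Rightarrow> 'a list \<Rightarrow> bool) \<Rightarrow> ('f \<Rightarrow> 'a list \<Rightarrow> 'a) \<Rightarrow> 'a set \<Rightarrow> nat \<Rightarrow> nat
     \<Rightarrow> ('a list set \<Rightarrow> real) \<Rightarrow> ('a list set \<Rightarrow> real) \<Rightarrow> bool" where
  "E_above_over U rel fn A n m \<mu> \<nu> \<longleftrightarrow>
     (\<exists>lam\<in>MM U rel fn A (n + m).
        pi_x U rel fn A n m lam = restr (LL U rel fn A n) \<mu> \<and>
        (\<forall>\<omega>\<in>MM U rel fn U (n + m).
           restr (LL U rel fn A (n + m)) \<omega> = lam \<and> pi_x U rel fn U n m \<omega> = \<mu>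
           \<longrightarrow> pi_y U rel fn U n m \<omega> = \<nu>))"

definition E_above ::
  "'k rel \<Rightarrow> 'a set \<Rightarrow> ('r \<Rightarrow> 'a list \<Rightarrow> bool) \<Rightarrow> ('f \<Rightarrow> 'a list \<Rightarrow> 'a) \<Rightarrow> nat \<Rightarrow> nat
     \<Rightarrow> ('a list set \<Rightarrow> real) \<Rightarrow> ('a list set \<Rightarrow> real) \<Rightarrow> bool" where
  "E_above \<kappa> U rel fn n m \<mu> \<nu> \<longleftrightarrow> (\<exists>A. small \<kappa> U A \<and> E_above_over U rel fn A n m \<mu> \<nu>)"

definition smooth_over ::
  "'a set \<Rightarrow> ('r \<Rightarrow> 'a list \<Rightarrow> bool) \<Rightarrow> ('f \<Rightarrow> 'a list \<Rightarrow> 'a) \<Rightarrow> 'a set \<Rightarrow> nat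
     \<Rightarrow> ('a list set \<Rightarrow> real) \<Rightarrow> bool" where
  "smooth_over U rel fn A n \<mu> \<longleftrightarrow> \<mu> \<in> MM U rel fn U n \<and>
     (\<forall>\<mu>'\<in>MM U rel fn U n. restr (LL U rel fn A n) \<mu>' = restr (LL U rel fn A n) \<mu> \<longrightarrow> \<mu>' = \<mu>)"

definition smooth ::
  "'k rel \<Rightarrow> 'a set \<Rightarrow> ('r \<Rightarrow> 'a list \<Rightarrow> bool) \<Rightarrow> ('f \<Rightarrow> 'a list \<Rightarrow> 'a) \<Rightarrow> nat
     \<Rightarrow> ('a list set \<Rightarrow> real) \<Rightarrow> bool" where
  "smooth \<kappa> U rel fn n \<mu> \<longleftrightarrow> (\<exists>A. small \<kappa> U A \<and> smooth_over U rel fn A n \<mu>)"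

end

theory Submission
  imports Defs
begin


definition alg :: "'b set \<Rightarrow> 'b set set \<Rightarrow> bool" where
  "alg S B \<longleftrightarrow> B \<subseteq> Pow S \<and> S \<in> B \<and> (\<forall>X\<in>B. S - X \<in> B) \<and> (\<forall>X\<in>B. \<forall>Y\<in>B. X \<inter> Y \<in> B)"

definition addv :: "'b set set \<Rightarrow> ('b set \<Rightarrow> real) \<Rightarrow> bool" where
  "addv B f \<longleftrightarrow> (\<forall>X\<in>B. \<forall>Y\<in>B. X \<inter> Y = {} \<longrightarrow> f (X \<union> Y) = f X + f Y)"

definition posv :: "'b set set \<Rightarrow> ('b set \<Rightarrow> real) \<Rightarrow> bool" where
  "posv B f \<longleftrightarrow> (\<forall>X\<in>B. 0 \<le> f X)"

lemma alg_sub: "alg S B \<Longrightarrow> X \<in> B \<Longrightarrow> X \<subseteq> S"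
  unfolding alg_def by blast
lemma alg_S: "alg S B \<Longrightarrow> S \<in> B"
  unfolding alg_def by blast
lemma alg_compl: "alg S B \<Longrightarrow> X \<in> B \<Longrightarrow> S - X \<in> B"
  unfolding alg_def by blast
lemma alg_Int: "alg S B \<Longrightarrow> X \<in> B \<Longrightarrow> Y \<in> B \<Longrightarrow> X \<inter> Y \<in> B"
  unfolding alg_def by blast
lemma alg_empty: "alg S B \<Longrightarrow> {} \<in> B"
  using alg_S alg_compl by fastforce
lemma alg_Diff: "alg S B \<Longrightarrow> X \<in> B \<Longrightarrow> Y \<in> B \<Longrightarrow> X - Y \<in> B"
proof -
  assume a: "alg S B" "X \<in> B" "Y \<in> B"
  have "X - Y = X \<inter> (S - Y)" using alg_sub[OF a(1,2)] by blast
  thus ?thesis using a alg_Int alg_compl by metis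
qed
lemma alg_Un: "alg S B \<Longrightarrow> X \<in> B \<Longrightarrow> Y \<in> B \<Longrightarrow> X \<union> Y \<in> B"
proof -
  assume a: "alg S B" "X \<in> B" "Y \<in> B"
  have "X \<union> Y = S - ((S - X) \<inter> (S - Y))" using alg_sub[OF a(1,2)] alg_sub[OF a(1,3)] by blast
  thus ?thesis using a alg_Int alg_compl by metis
qed
lemma alg_Int_alg: "alg S B1 \<Longrightarrow> alg S B2 \<Longrightarrow> alg S (B1 \<inter> B2)"
  unfolding alg_def by blast

lemma addvD: "addv B f \<Longrightarrow> X \<in> B \<Longrightarrow> Y \<in> B \<Longrightarrow> X \<inter> Y = {} \<Longrightarrow> f (X \<union> Y) = f X + f Y"
  unfolding addv_def by blast

lemma addv_empty: "alg S B \<Longrightarrow> addv B f \<Longrightarrow> f {} = 0"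
  using addvD[of B f "{}" "{}"] alg_empty by fastforce

lemma addv_split: "alg S B \<Longrightarrow> addv B f \<Longrightarrow> X \<in> B \<Longrightarrow> Y \<in> B \<Longrightarrow> f X = f (X \<inter> Y) + f (X - Y)"
proof -
  assume a: "alg S B" "addv B f" "X \<in> B" "Y \<in> B"
  have "X = (X \<inter> Y) \<union> (X - Y)" by blast
  hence "f X = f ((X \<inter> Y) \<union> (X - Y))" by simp
  also have "\<dots> = f (X \<inter> Y) + f (X - Y)"
    using a by (intro addvD) (auto intro: alg_Int alg_Diff)
  finally show ?thesis .
qed

lemma addv_mono: "alg S B \<Longrightarrow> addv B f \<Longrightarrow> posv B f \<Longrightarrow> X \<in> B \<Longrightarrow> Y \<in> B \<Longrightarrow> X \<subseteq> Y \<Longrightarrow> f X \<le> f Y"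
proof -
  assume a: "alg S B" "addv B f" "posv B f" "X \<in> B" "Y \<in> B" "X \<subseteq> Y"
  have "f Y = f (Y \<inter> X) + f (Y - X)" using addv_split a by blast
  moreover have "Y \<inter> X = X" using a by blast
  moreover have "0 \<le> f (Y - X)" using a alg_Diff unfolding posv_def by blast
  ultimately show ?thesis by simp
qed

lemma addv_diff_fun: "addv B f \<Longrightarrow> addv B g \<Longrightarrow> addv B (\<lambda>X. f X - g X)"
  unfolding addv_def by auto

lemma addv_eq_if_diffs_zero:
  assumes "alg S B" "addv B g" "X1 \<in> B" "X2 \<in> B" "g (X1 - X2) = 0" "g (X2 - X1) = 0"
  shows "g X1 = g X2"
proof -
  have "g X1 = g (X1 \<inter> X2) + g (X1 - X2)" using addv_split assms by blast
  moreover have "g X2 = g (X2 \<inter> X1) + g (X2 - X1)" using addv_split assms by blast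
  moreover have "X1 \<inter> X2 = X2 \<inter> X1" by blast
  ultimately show ?thesis using assms by simp
qed


lemma one_step:
  assumes alg: "alg S B" and YS: "Y \<subseteq> S" and af: "addv B f" and pf: "posv B f"
    and ap: "addv B \<psi>" and pb: "\<forall>X\<in>B. 0 \<le> \<psi> X \<and> \<psi> X \<le> f X"
    and z: "\<forall>X\<in>B. X \<inter> Y = {} \<longrightarrow> \<psi> X = 0"
    and full: "\<forall>X\<in>B. X \<subseteq> Y \<longrightarrow> \<psi> X = f X"
  shows "\<exists>f'. alg S {(X \<inter> Y) \<union> (X' - Y) | X X'. X \<in> B \<and> X' \<in> B}
     \<and> addv {(X \<inter> Y) \<union> (X' - Y) | X X'. X \<in> B \<and> X' \<in> B} f'
     \<and> posv {(X \<inter> Y) \<union> (X' - Y) | X X'. X \<in> B \<and> X' \<in> B} f'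
     \<and> B \<subseteq> {(X \<inter> Y) \<union> (X' - Y) | X X'. X \<in> B \<and> X' \<in> B}
     \<and> Y \<in> {(X \<inter> Y) \<union> (X' - Y) | X X'. X \<in> B \<and> X' \<in> B}
     \<and> (\<forall>X\<in>B. \<forall>X'\<in>B. f' ((X \<inter> Y) \<union> (X' - Y)) = \<psi> X + (f X' - \<psi> X'))"
proof -
  define B' where "B' = {(X \<inter> Y) \<union> (X' - Y) | X X'. X \<in> B \<and> X' \<in> B}"
  define g where "g = (\<lambda>X. f X - \<psi> X)"
  have ag: "addv B g" unfolding g_def using af ap by (rule addv_diff_fun)
  have w1: "\<psi> X1 = \<psi> X2" if "X1 \<in> B" "X2 \<in> B" "X1 \<inter> Y = X2 \<inter> Y" for X1 X2
  proof (rule addv_eq_if_diffs_zero[OF alg ap that(1,2)])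
    show "\<psi> (X1 - X2) = 0" using z alg_Diff[OF alg that(1,2)] that(3) by blast
    show "\<psi> (X2 - X1) = 0" using z alg_Diff[OF alg that(2,1)] that(3) by blast
  qed
  have w2: "g X1 = g X2" if "X1 \<in> B" "X2 \<in> B" "X1 - Y = X2 - Y" for X1 X2
  proof (rule addv_eq_if_diffs_zero[OF alg ag that(1,2)])
    have "X1 - X2 \<subseteq> Y" "X2 - X1 \<subseteq> Y" using that(3) by blast+
    thus "g (X1 - X2) = 0" "g (X2 - X1) = 0"
      using full alg_Diff[OF alg that(1,2)] alg_Diff[OF alg that(2,1)] unfolding g_def by auto
  qed
  define f' where "f' = (\<lambda>H. SOME r. \<exists>X X'. X \<in> B \<and> X' \<in> B \<and> H = (X \<inter> Y) \<union> (X' - Y) \<and> r = \<psi> X + g X')"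
  have val: "f' ((X \<inter> Y) \<union> (X' - Y)) = \<psi> X + g X'" if "X \<in> B" "X' \<in> B" for X X'
  proof -
    let ?H = "(X \<inter> Y) \<union> (X' - Y)"
    have ex: "\<exists>r. \<exists>X1 X1'. X1 \<in> B \<and> X1' \<in> B \<and> ?H = (X1 \<inter> Y) \<union> (X1' - Y) \<and> r = \<psi> X1 + g X1'"
      using that by blast
    have "\<exists>X1 X1'. X1 \<in> B \<and> X1' \<in> B \<and> ?H = (X1 \<inter> Y) \<union> (X1' - Y) \<and> f' ?H = \<psi> X1 + g X1'"
      unfolding f'_def using someI_ex[OF ex] .
    then obtain X1 X1' where h: "X1 \<in> B" "X1' \<in> B" "?H = (X1 \<inter> Y) \<union> (X1' - Y)" "f' ?H = \<psi> X1 + g X1'"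
      by blast
    have "X1 \<inter> Y = X \<inter> Y" using h(3) by blast
    moreover have "X1' - Y = X' - Y" using h(3) by blast
    ultimately have "\<psi> X1 = \<psi> X" "g X1' = g X'" using w1[OF h(1) that(1)] w2[OF h(2) that(2)] by auto
    thus ?thesis using h(4) by simp
  qed
  have Ssub: "\<And>X. X \<in> B \<Longrightarrow> X \<subseteq> S" using alg alg_sub by blast
  have algB': "alg S B'"
    unfolding alg_def
  proof (intro conjI ballI)
    show "B' \<subseteq> Pow S" unfolding B'_def using Ssub by blast
    have "S = (S \<inter> Y) \<union> (S - Y)" by blast
    thus "S \<in> B'" unfolding B'_def using alg_S[OF alg] by blast
  next
    fix H assume "H \<in> B'"
    then obtain X X' where h: "X \<in> B" "X' \<in> B" "H = (X \<inter> Y) \<union> (X' - Y)" unfolding B'_def by blast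
    have "S - H = ((S - X) \<inter> Y) \<union> ((S - X') - Y)" using h YS by blast
    thus "S - H \<in> B'" unfolding B'_def using alg_compl[OF alg] h by blast
  next
    fix H H' assume "H \<in> B'" "H' \<in> B'"
    then obtain X X' Z Z' where h: "X \<in> B" "X' \<in> B" "H = (X \<inter> Y) \<union> (X' - Y)"
      "Z \<in> B" "Z' \<in> B" "H' = (Z \<inter> Y) \<union> (Z' - Y)" unfolding B'_def by blast
    have "H \<inter> H' = ((X \<inter> Z) \<inter> Y) \<union> ((X' \<inter> Z') - Y)" using h by blast
    thus "H \<inter> H' \<in> B'" unfolding B'_def using alg_Int[OF alg] h by blast
  qed
  have addB': "addv B' f'"
    unfolding addv_def
  proof (intro ballI impI)
    fix H H' assume "H \<in> B'" "H' \<in> B'" and disj: "H \<inter> H' = {}"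
    then obtain X X' Z Z' where h: "X \<in> B" "X' \<in> B" "H = (X \<inter> Y) \<union> (X' - Y)"
      "Z \<in> B" "Z' \<in> B" "H' = (Z \<inter> Y) \<union> (Z' - Y)" unfolding B'_def by blast
    have U: "H \<union> H' = ((X \<union> Z) \<inter> Y) \<union> ((X' \<union> Z') - Y)" using h by blast
    have XZ: "X \<union> (Z - X) = X \<union> Z" "X \<inter> (Z - X) = {}" "X' \<union> (Z' - X') = X' \<union> Z'" "X' \<inter> (Z' - X') = {}" by blast+
    have p1: "\<psi> (X \<union> Z) = \<psi> X + \<psi> (Z - X)"
      using addvD[OF ap h(1) alg_Diff[OF alg h(4,1)] XZ(2)] unfolding XZ(1) .
    have "(Z - X) \<inter> Y = Z \<inter> Y" using disj h by blast
    hence p2: "\<psi> (Z - X) = \<psi> Z"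
      using w1[OF alg_Diff[OF alg h(4,1)] h(4)] by blast
    have q1: "g (X' \<union> Z') = g X' + g (Z' - X')"
      using addvD[OF ag h(2) alg_Diff[OF alg h(5,2)] XZ(4)] unfolding XZ(3) .
    have "(Z' - X') - Y = Z' - Y" using disj h by blast
    hence q2: "g (Z' - X') = g Z'"
      using w2[OF alg_Diff[OF alg h(5,2)] h(5)] by blast
    have "f' (H \<union> H') = \<psi> (X \<union> Z) + g (X' \<union> Z')"
      using U val alg_Un[OF alg h(1,4)] alg_Un[OF alg h(2,5)] by simp
    also have "\<dots> = (\<psi> X + g X') + (\<psi> Z + g Z')" using p1 p2 q1 q2 by simp
    also have "\<dots> = f' H + f' H'" using val h by simp
    finally show "f' (H \<union> H') = f' H + f' H'" .
  qed
  have posB': "posv B' f'"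
    unfolding posv_def
  proof
    fix H assume "H \<in> B'"
    then obtain X X' where h: "X \<in> B" "X' \<in> B" "H = (X \<inter> Y) \<union> (X' - Y)" unfolding B'_def by blast
    show "0 \<le> f' H" using val[OF h(1,2)] h pb unfolding g_def by force
  qed
  have sub: "B \<subseteq> B'"
  proof
    fix X assume "X \<in> B"
    have "X = (X \<inter> Y) \<union> (X - Y)" by blast
    thus "X \<in> B'" unfolding B'_def using \<open>X \<in> B\<close> by blast
  qed
  have YB: "Y \<in> B'"
  proof -
    have "Y = (S \<inter> Y) \<union> ({} - Y)" using YS by blast
    thus ?thesis unfolding B'_def using alg_S[OF alg] alg_empty[OF alg] by blast
  qed
  show ?thesis
    apply (rule exI[of _ f'])
    using algB' addB' posB' sub YB val unfolding B'_def g_def by simp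
qed



lemma sup_add:
  assumes alg: "alg S B" and ah: "addv B h"
    and Ph: "\<forall>G\<in>B. \<forall>G'\<in>B. P G \<longrightarrow> G' \<subseteq> G \<longrightarrow> P G'"
    and Pu: "\<forall>G\<in>B. \<forall>G'\<in>B. P G \<longrightarrow> P G' \<longrightarrow> P (G \<union> G')"
    and P0: "P {}" and bd: "\<forall>G\<in>B. P G \<longrightarrow> h G \<le> K"
    and X1: "X1 \<in> B" and X2: "X2 \<in> B" and dj: "X1 \<inter> X2 = {}"
  shows "Sup {h G | G. G \<in> B \<and> G \<subseteq> X1 \<union> X2 \<and> P G}
       = Sup {h G | G. G \<in> B \<and> G \<subseteq> X1 \<and> P G} + Sup {h G | G. G \<in> B \<and> G \<subseteq> X2 \<and> P G}"
proof -
  define s where "s X = Sup {h G | G. G \<in> B \<and> G \<subseteq> X \<and> P G}" for X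
  have ne: "{h G | G. G \<in> B \<and> G \<subseteq> X \<and> P G} \<noteq> {}" for X
    using alg_empty[OF alg] P0 by blast
  have bda: "bdd_above {h G | G. G \<in> B \<and> G \<subseteq> X \<and> P G}" for X
    unfolding bdd_above_def using bd by blast
  have up: "h G \<le> s X" if "G \<in> B" "G \<subseteq> X" "P G" for G X
    unfolding s_def by (rule cSup_upper) (use that bda in auto)
  have least: "s X \<le> c" if "\<And>G. G \<in> B \<Longrightarrow> G \<subseteq> X \<Longrightarrow> P G \<Longrightarrow> h G \<le> c" for X c
    unfolding s_def by (rule cSup_least) (use that ne in auto)
  have le1: "s (X1 \<union> X2) \<le> s X1 + s X2"
  proof (rule least)
    fix G assume G: "G \<in> B" "G \<subseteq> X1 \<union> X2" "P G"
    have GB: "G \<inter> X1 \<in> B" "G \<inter> X2 \<in> B" using G alg_Int alg X1 X2 by blast+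
    have PG: "P (G \<inter> X1)" "P (G \<inter> X2)" using Ph G GB by blast+
    have "G = (G \<inter> X1) \<union> (G \<inter> X2)" using G by blast
    hence "h G = h ((G \<inter> X1) \<union> (G \<inter> X2))" by simp
    also have "\<dots> = h (G \<inter> X1) + h (G \<inter> X2)" using addvD[OF ah GB] dj by blast
    also have "\<dots> \<le> s X1 + s X2" using up[OF GB(1) _ PG(1)] up[OF GB(2) _ PG(2)] by (intro add_mono) auto
    finally show "h G \<le> s X1 + s X2" .
  qed
  have le2: "s X1 + s X2 \<le> s (X1 \<union> X2)"
  proof -
    have "s X1 \<le> s (X1 \<union> X2) - s X2"
    proof (rule least)
      fix G1 assume G1: "G1 \<in> B" "G1 \<subseteq> X1" "P G1"
      have "s X2 \<le> s (X1 \<union> X2) - h G1"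
      proof (rule least)
        fix G2 assume G2: "G2 \<in> B" "G2 \<subseteq> X2" "P G2"
        have "h (G1 \<union> G2) = h G1 + h G2" using addvD[OF ah G1(1) G2(1)] G1 G2 dj by blast
        moreover have "h (G1 \<union> G2) \<le> s (X1 \<union> X2)"
          using up[of "G1 \<union> G2" "X1 \<union> X2"] alg_Un[OF alg G1(1) G2(1)] Pu G1 G2 by blast
        ultimately show "h G2 \<le> s (X1 \<union> X2) - h G1" by simp
      qed
      thus "h G1 \<le> s (X1 \<union> X2) - s X2" by simp
    qed
    thus ?thesis by simp
  qed
  show ?thesis using le1 le2 unfolding s_def by simp
qed


definition lechain :: "('b set set \<times> ('b set \<Rightarrow> real)) set \<Rightarrow> bool" where
  "lechain C \<longleftrightarrow> (\<forall>p\<in>C. \<forall>q\<in>C. (fst p \<subseteq> fst q \<and> (\<forall>X\<in>fst p. snd p X = snd q X))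
                              \<or> (fst q \<subseteq> fst p \<and> (\<forall>X\<in>fst q. snd q X = snd p X)))"

definition glue :: "('b set set \<times> ('b set \<Rightarrow> real)) set \<Rightarrow> 'b set \<Rightarrow> real" where
  "glue C X = (SOME r. \<exists>p\<in>C. X \<in> fst p \<and> r = snd p X)"

lemma glue_eq: "lechain C \<Longrightarrow> p \<in> C \<Longrightarrow> X \<in> fst p \<Longrightarrow> glue C X = snd p X"
proof -
  assume a: "lechain C" "p \<in> C" "X \<in> fst p"
  have "\<exists>r. \<exists>q\<in>C. X \<in> fst q \<and> r = snd q X" using a by blast
  from someI_ex[OF this] obtain q where q: "q \<in> C" "X \<in> fst q" "glue C X = snd q X"
    unfolding glue_def by blast
  have "(fst p \<subseteq> fst q \<and> (\<forall>X\<in>fst p. snd p X = snd q X)) \<or> (fst q \<subseteq> fst p \<and> (\<forall>X\<in>fst q. snd q X = snd p X))"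
    using a(1,2) q(1) unfolding lechain_def by blast
  thus ?thesis using a(3) q(2,3) by auto
qed

lemma chain_two: "lechain C \<Longrightarrow> X \<in> \<Union>(fst ` C) \<Longrightarrow> Y \<in> \<Union>(fst ` C) \<Longrightarrow> \<exists>p\<in>C. X \<in> fst p \<and> Y \<in> fst p"
  unfolding lechain_def by blast

lemma chain_alg: "C \<noteq> {} \<Longrightarrow> lechain C \<Longrightarrow> \<forall>p\<in>C. alg S (fst p) \<Longrightarrow> alg S (\<Union>(fst ` C))"
proof -
  assume a: "C \<noteq> {}" "lechain C" "\<forall>p\<in>C. alg S (fst p)"
  show ?thesis unfolding alg_def
  proof (intro conjI ballI subsetI)
    fix X assume "X \<in> \<Union>(fst ` C)"
    then obtain p where "p \<in> C" "X \<in> fst p" by blast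
    thus "X \<in> Pow S" using a(3) alg_sub by blast
  next
    obtain p where "p \<in> C" using a(1) by blast
    hence "S \<in> fst p" using a(3) alg_S by blast
    thus "S \<in> \<Union>(fst ` C)" using \<open>p \<in> C\<close> by blast
  next
    fix X assume "X \<in> \<Union>(fst ` C)"
    then obtain p where "p \<in> C" "X \<in> fst p" by blast
    hence "S - X \<in> fst p" using a(3) alg_compl by blast
    thus "S - X \<in> \<Union>(fst ` C)" using \<open>p \<in> C\<close> by blast
  next
    fix X Y assume "X \<in> \<Union>(fst ` C)" "Y \<in> \<Union>(fst ` C)"
    then obtain p where "p \<in> C" "X \<in> fst p" "Y \<in> fst p" using chain_two a(2) by blast
    hence "X \<inter> Y \<in> fst p" using a(3) alg_Int by blast
    thus "X \<inter> Y \<in> \<Union>(fst ` C)" using \<open>p \<in> C\<close> by blast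
  qed
qed

lemma chain_addv: "lechain C \<Longrightarrow> \<forall>p\<in>C. alg S (fst p) \<and> addv (fst p) (snd p) \<Longrightarrow> addv (\<Union>(fst ` C)) (glue C)"
proof -
  assume a: "lechain C" "\<forall>p\<in>C. alg S (fst p) \<and> addv (fst p) (snd p)"
  show ?thesis unfolding addv_def
  proof (intro ballI impI)
    fix X Y assume "X \<in> \<Union>(fst ` C)" "Y \<in> \<Union>(fst ` C)" "X \<inter> Y = {}"
    then obtain p where p: "p \<in> C" "X \<in> fst p" "Y \<in> fst p" using chain_two a(1) by blast
    have "alg S (fst p)" using p a(2) by blast
    hence "X \<union> Y \<in> fst p" using p alg_Un by blast
    hence "glue C (X \<union> Y) = snd p (X \<union> Y)" "glue C X = snd p X" "glue C Y = snd p Y"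
      using glue_eq[OF a(1) p(1)] p by auto
    moreover have "snd p (X \<union> Y) = snd p X + snd p Y"
      using addvD[of "fst p" "snd p" X Y] a(2) p \<open>X \<inter> Y = {}\<close> by blast
    ultimately show "glue C (X \<union> Y) = glue C X + glue C Y" by simp
  qed
qed

lemma chain_pw: "lechain C \<Longrightarrow> \<forall>p\<in>C. \<forall>X\<in>fst p. R X (snd p X) \<Longrightarrow> \<forall>X\<in>\<Union>(fst ` C). R X (glue C X)"
proof -
  assume a: "lechain C" "\<forall>p\<in>C. \<forall>X\<in>fst p. R X (snd p X)"
  show ?thesis
  proof
    fix X assume "X \<in> \<Union>(fst ` C)"
    then obtain p where "p \<in> C" "X \<in> fst p" by blast
    thus "R X (glue C X)" using glue_eq[OF a(1)] a(2) by metis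
  qed
qed

lemma zorn_ext:
  fixes Q :: "'b set set \<Rightarrow> ('b set \<Rightarrow> real) \<Rightarrow> bool"
  assumes Q0: "Q B0 f0" and B0: "B0 \<subseteq> \<Omega>"
    and chain: "\<And>C. C \<noteq> {} \<Longrightarrow> \<forall>p\<in>C. Q (fst p) (snd p) \<and> fst p \<subseteq> \<Omega> \<Longrightarrow> lechain C
                   \<Longrightarrow> Q (\<Union>(fst ` C)) (glue C)"
    and step: "\<And>B f Y. Q B f \<Longrightarrow> B \<subseteq> \<Omega> \<Longrightarrow> Y \<in> T \<Longrightarrow> Y \<notin> B \<Longrightarrow>
                 \<exists>B' f'. Q B' f' \<and> B' \<subseteq> \<Omega> \<and> Y \<in> B' \<and> B \<subseteq> B' \<and> (\<forall>X\<in>B. f' X = f X)"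
  shows "\<exists>B f. Q B f \<and> B \<subseteq> \<Omega> \<and> T \<subseteq> B \<and> B0 \<subseteq> B \<and> (\<forall>X\<in>B0. f X = f0 X)"
proof -
  define P where "P = {(B, f). Q B f \<and> B \<subseteq> \<Omega> \<and> B0 \<subseteq> B \<and> (\<forall>X\<in>B0. f X = f0 X)}"
  define gr where "gr = (\<lambda>(B :: 'b set set, f :: 'b set \<Rightarrow> real). (\<lambda>X. (X, f X)) ` B)"
  have gr_sub: "gr p \<subseteq> gr q \<longleftrightarrow> fst p \<subseteq> fst q \<and> (\<forall>X\<in>fst p. snd p X = snd q X)" for p q
    unfolding gr_def by (cases p; cases q) auto
  define G where "G = gr ` P"
  have p0: "(B0, f0) \<in> P" unfolding P_def using Q0 B0 by auto
  have "\<exists>M\<in>G. \<forall>X\<in>G. M \<subseteq> X \<longrightarrow> X = M"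
  proof (rule Zorn_Lemma2, intro ballI)
    fix Ch assume Ch: "Ch \<in> chains G"
    show "\<exists>U\<in>G. \<forall>X\<in>Ch. X \<subseteq> U"
    proof (cases "Ch = {}")
      case True thus ?thesis using p0 unfolding G_def by blast
    next
      case False
      define C where "C = {p \<in> P. gr p \<in> Ch}"
      have ChG: "Ch \<subseteq> G" using Ch unfolding chains_def by blast
      have Cne: "C \<noteq> {}" using False ChG unfolding C_def G_def by blast
      have lc: "lechain C" unfolding lechain_def
      proof (intro ballI)
        fix p q assume "p \<in> C" "q \<in> C"
        hence "gr p \<subseteq> gr q \<or> gr q \<subseteq> gr p" using Ch unfolding C_def chains_def chain_subset_def by blast
        thus "(fst p \<subseteq> fst q \<and> (\<forall>X\<in>fst p. snd p X = snd q X)) \<or> (fst q \<subseteq> fst p \<and> (\<forall>X\<in>fst q. snd q X = snd p X))"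
          using gr_sub by blast
      qed
      have QC: "\<forall>p\<in>C. Q (fst p) (snd p) \<and> fst p \<subseteq> \<Omega>" unfolding C_def P_def by auto
      define u where "u = (\<Union>(fst ` C), glue C)"
      have uP: "u \<in> P"
      proof -
        have "Q (\<Union>(fst ` C)) (glue C)" using chain[OF Cne QC lc] .
        moreover have "\<Union>(fst ` C) \<subseteq> \<Omega>" using QC by blast
        moreover obtain p where p: "p \<in> C" using Cne by blast
        moreover have "B0 \<subseteq> fst p" "\<forall>X\<in>B0. snd p X = f0 X" using p unfolding C_def P_def by auto
        ultimately show ?thesis unfolding u_def P_def using glue_eq[OF lc p] by auto
      qed
      have "\<forall>X\<in>Ch. X \<subseteq> gr u"
      proof
        fix X assume "X \<in> Ch"
        then obtain p where p: "p \<in> P" "X = gr p" using ChG unfolding G_def by blast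
        hence pC: "p \<in> C" unfolding C_def using \<open>X \<in> Ch\<close> by blast
        have "gr p \<subseteq> gr u" unfolding gr_sub u_def using glue_eq[OF lc pC] pC by auto
        thus "X \<subseteq> gr u" using p by simp
      qed
      thus ?thesis using uP unfolding G_def by blast
    qed
  qed
  then obtain p where pP: "p \<in> P" and mx: "\<forall>X\<in>G. gr p \<subseteq> X \<longrightarrow> X = gr p" unfolding G_def by blast
  obtain B f where pe: "p = (B, f)" by fastforce
  have QB: "Q B f" "B \<subseteq> \<Omega>" "B0 \<subseteq> B" "\<forall>X\<in>B0. f X = f0 X" using pP pe unfolding P_def by auto
  have "T \<subseteq> B"
  proof
    fix Y assume Y: "Y \<in> T"
    show "Y \<in> B"
    proof (rule ccontr)
      assume "Y \<notin> B"
      then obtain B' f' where st: "Q B' f'" "B' \<subseteq> \<Omega>" "Y \<in> B'" "B \<subseteq> B'" "\<forall>X\<in>B. f' X = f X"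
        using step[OF QB(1,2) Y] by blast
      have "(B', f') \<in> P" unfolding P_def using st QB by auto
      moreover have "gr p \<subseteq> gr (B', f')" unfolding pe gr_sub using st by auto
      ultimately have "gr (B', f') = gr p" using mx unfolding G_def by blast
      hence "(Y, f' Y) \<in> gr p" unfolding gr_def using st(3) by auto
      thus False using \<open>Y \<notin> B\<close> unfolding pe gr_def by auto
    qed
  qed
  thus ?thesis using QB by blast
qed



lemma supP_upper:
  fixes h :: "'b set \<Rightarrow> real"
  assumes "\<forall>G\<in>B. P G \<longrightarrow> h G \<le> K" "G \<in> B" "G \<subseteq> X" "P G"
  shows "h G \<le> Sup {h G | G. G \<in> B \<and> G \<subseteq> X \<and> P G}"
proof (rule cSup_upper)
  show "h G \<in> {h G | G. G \<in> B \<and> G \<subseteq> X \<and> P G}" using assms by blast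
  show "bdd_above {h G | G. G \<in> B \<and> G \<subseteq> X \<and> P G}"
    unfolding bdd_above_def using assms(1) by blast
qed

lemma supP_least:
  fixes h :: "'b set \<Rightarrow> real"
  assumes "{} \<in> B" "P {}" "\<And>G. G \<in> B \<Longrightarrow> G \<subseteq> X \<Longrightarrow> P G \<Longrightarrow> h G \<le> c"
  shows "Sup {h G | G. G \<in> B \<and> G \<subseteq> X \<and> P G} \<le> c"
proof (rule cSup_least)
  show "{h G | G. G \<in> B \<and> G \<subseteq> X \<and> P G} \<noteq> {}" using assms(1,2) by blast
  fix x assume "x \<in> {h G | G. G \<in> B \<and> G \<subseteq> X \<and> P G}"
  thus "x \<le> c" using assms(3) by blast
qed

lemma addv_supP:
  assumes alg: "alg S B" and ah: "addv B h"
    and Ph: "\<forall>G\<in>B. \<forall>G'\<in>B. P G \<longrightarrow> G' \<subseteq> G \<longrightarrow> P G'"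
    and Pu: "\<forall>G\<in>B. \<forall>G'\<in>B. P G \<longrightarrow> P G' \<longrightarrow> P (G \<union> G')"
    and P0: "P {}" and bd: "\<forall>G\<in>B. P G \<longrightarrow> h G \<le> K"
  shows "addv B (\<lambda>X. Sup {h G | G. G \<in> B \<and> G \<subseteq> X \<and> P G})"
  unfolding addv_def using sup_add[OF alg ah Ph Pu P0 bd] by blast

definition gen :: "'b set set \<Rightarrow> 'b set \<Rightarrow> 'b set set" where
  "gen B Y = {(X \<inter> Y) \<union> (X' - Y) | X X'. X \<in> B \<and> X' \<in> B}"

lemma one_step':
  assumes "alg S B" "Y \<subseteq> S" "addv B f" "posv B f" "addv B \<psi>" "\<forall>X\<in>B. 0 \<le> \<psi> X \<and> \<psi> X \<le> f X"
    "\<forall>X\<in>B. X \<inter> Y = {} \<longrightarrow> \<psi> X = 0" "\<forall>X\<in>B. X \<subseteq> Y \<longrightarrow> \<psi> X = f X"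
  obtains f' where "alg S (gen B Y)" "addv (gen B Y) f'" "posv (gen B Y) f'" "B \<subseteq> gen B Y" "Y \<in> gen B Y"
    "\<And>X X'. X \<in> B \<Longrightarrow> X' \<in> B \<Longrightarrow> f' ((X \<inter> Y) \<union> (X' - Y)) = \<psi> X + (f X' - \<psi> X')"
proof -
  from one_step[OF assms] obtain f' where "alg S (gen B Y) \<and> addv (gen B Y) f' \<and> posv (gen B Y) f' \<and> B \<subseteq> gen B Y \<and> Y \<in> gen B Y
    \<and> (\<forall>X\<in>B. \<forall>X'\<in>B. f' ((X \<inter> Y) \<union> (X' - Y)) = \<psi> X + (f X' - \<psi> X'))"
    unfolding gen_def by blast
  thus ?thesis using that by blast
qed

lemma gen_mem: "X \<in> B \<Longrightarrow> X' \<in> B \<Longrightarrow> (X \<inter> Y) \<union> (X' - Y) \<in> gen B Y"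
  unfolding gen_def by blast

lemma gen_cases: "H \<in> gen B Y \<Longrightarrow> (\<And>X X'. X \<in> B \<Longrightarrow> X' \<in> B \<Longrightarrow> H = (X \<inter> Y) \<union> (X' - Y) \<Longrightarrow> thesis) \<Longrightarrow> thesis"
  unfolding gen_def by blast

lemma LM_step:
  assumes alg: "alg S B" and af: "addv B f" and pf: "posv B f" and YS: "Y \<subseteq> S"
  obtains f' where "alg S (gen B Y)" "addv (gen B Y) f'" "posv (gen B Y) f'" "B \<subseteq> gen B Y" "Y \<in> gen B Y"
     "\<forall>X\<in>B. f' X = f X"
proof -
  define P where "P = (\<lambda>G::'a set. G \<subseteq> Y)"
  define \<psi> where "\<psi> = (\<lambda>X. Sup {f G | G. G \<in> B \<and> G \<subseteq> X \<and> P G})"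
  have e: "{} \<in> B" "P {}" using alg_empty[OF alg] unfolding P_def by auto
  have f0: "f {} = 0" using addv_empty[OF alg af] .
  have bd: "\<forall>G\<in>B. P G \<longrightarrow> f G \<le> f S"
  proof (intro ballI impI)
    fix G assume G: "G \<in> B"
    show "f G \<le> f S" using addv_mono[OF alg af pf G alg_S[OF alg] alg_sub[OF alg G]] .
  qed
  have ap: "addv B \<psi>" unfolding \<psi>_def
    by (rule addv_supP[OF alg af _ _ _ bd]) (auto simp: P_def)
  have pb: "\<forall>X\<in>B. 0 \<le> \<psi> X \<and> \<psi> X \<le> f X"
  proof
    fix X assume X: "X \<in> B"
    have "f {} \<le> \<psi> X" unfolding \<psi>_def by (rule supP_upper[OF bd e(1)]) (use e in auto)
    moreover have "\<psi> X \<le> f X" unfolding \<psi>_def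
    proof (rule supP_least[where P=P, OF e])
      fix G assume "G \<in> B" "G \<subseteq> X"
      thus "f G \<le> f X" using addv_mono[OF alg af pf _ X] by blast
    qed
    ultimately show "0 \<le> \<psi> X \<and> \<psi> X \<le> f X" using f0 by simp
  qed
  have z: "\<forall>X\<in>B. X \<inter> Y = {} \<longrightarrow> \<psi> X = 0"
  proof (intro ballI impI)
    fix X assume X: "X \<in> B" "X \<inter> Y = {}"
    have "\<psi> X \<le> 0" unfolding \<psi>_def
    proof (rule supP_least[where P=P, OF e])
      fix G assume "G \<in> B" "G \<subseteq> X" "P G"
      hence "G = {}" using X unfolding P_def by blast
      thus "f G \<le> 0" using f0 by simp
    qed
    moreover have "0 \<le> \<psi> X" using pb X(1) by blast
    ultimately show "\<psi> X = 0" by simp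
  qed
  have full: "\<forall>X\<in>B. X \<subseteq> Y \<longrightarrow> \<psi> X = f X"
  proof (intro ballI impI)
    fix X assume X: "X \<in> B" "X \<subseteq> Y"
    have "f X \<le> \<psi> X" unfolding \<psi>_def by (rule supP_upper[OF bd X(1)]) (use X in \<open>auto simp: P_def\<close>)
    moreover have "\<psi> X \<le> f X" using pb X(1) by blast
    ultimately show "\<psi> X = f X" by simp
  qed
  obtain f' where o: "alg S (gen B Y)" "addv (gen B Y) f'" "posv (gen B Y) f'" "B \<subseteq> gen B Y" "Y \<in> gen B Y"
    and v: "\<And>X X'. X \<in> B \<Longrightarrow> X' \<in> B \<Longrightarrow> f' ((X \<inter> Y) \<union> (X' - Y)) = \<psi> X + (f X' - \<psi> X')"
    using one_step'[OF alg YS af pf ap pb z full] by blast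
  have "\<forall>X\<in>B. f' X = f X"
  proof
    fix X assume X: "X \<in> B"
    have "X = (X \<inter> Y) \<union> (X - Y)" by blast
    hence "f' X = \<psi> X + (f X - \<psi> X)" using v[OF X X] by simp
    thus "f' X = f X" by simp
  qed
  thus ?thesis using o that by blast
qed

lemma gen_sub: "alg S \<Omega> \<Longrightarrow> B \<subseteq> \<Omega> \<Longrightarrow> Y \<in> \<Omega> \<Longrightarrow> gen B Y \<subseteq> \<Omega>"
proof
  fix H assume a: "alg S \<Omega>" "B \<subseteq> \<Omega>" "Y \<in> \<Omega>" "H \<in> gen B Y"
  then obtain X X' where "X \<in> \<Omega>" "X' \<in> \<Omega>" "H = (X \<inter> Y) \<union> (X' - Y)" unfolding gen_def by blast
  thus "H \<in> \<Omega>" using a(1,3) alg_Un alg_Int alg_Diff by metis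
qed


lemma chain_Q3:
  assumes "C \<noteq> {}" "lechain C" "\<forall>p\<in>C. alg S (fst p) \<and> addv (fst p) (snd p) \<and> posv (fst p) (snd p)"
  shows "alg S (\<Union>(fst ` C)) \<and> addv (\<Union>(fst ` C)) (glue C) \<and> posv (\<Union>(fst ` C)) (glue C)"
proof -
  have "alg S (\<Union>(fst ` C))" using chain_alg[OF assms(1,2)] assms(3) by blast
  moreover have "addv (\<Union>(fst ` C)) (glue C)" using chain_addv[OF assms(2)] assms(3) by blast
  moreover have "\<forall>p\<in>C. \<forall>X\<in>fst p. 0 \<le> snd p X" using assms(3) unfolding posv_def by blast
  hence "posv (\<Union>(fst ` C)) (glue C)"
    using chain_pw[OF assms(2), of "\<lambda>X r. 0 \<le> r"] unfolding posv_def by blast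
  ultimately show ?thesis by blast
qed

lemma ext_K:
  assumes aO: "alg S \<Omega>" and a0: "alg S B0" and sub: "B0 \<subseteq> \<Omega>" and am: "addv B0 m0" and pm: "posv B0 m0"
  shows "\<exists>f. addv \<Omega> f \<and> posv \<Omega> f \<and> (\<forall>X\<in>B0. f X = m0 X)"
proof -
  define Q where "Q = (\<lambda>B f. alg S B \<and> addv B f \<and> posv B f)"
  have "\<exists>B f. Q B f \<and> B \<subseteq> \<Omega> \<and> \<Omega> \<subseteq> B \<and> B0 \<subseteq> B \<and> (\<forall>X\<in>B0. f X = m0 X)"
  proof (rule zorn_ext[where Q = Q])
    show "Q B0 m0" unfolding Q_def using a0 am pm by blast
    show "B0 \<subseteq> \<Omega>" by fact
  next
    fix C :: "('a set set \<times> ('a set \<Rightarrow> real)) set"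
    assume C: "C \<noteq> {}" "\<forall>p\<in>C. Q (fst p) (snd p) \<and> fst p \<subseteq> \<Omega>" "lechain C"
    show "Q (\<Union>(fst ` C)) (glue C)" unfolding Q_def
      by (rule chain_Q3[OF C(1,3)]) (use C(2) in \<open>auto simp: Q_def\<close>)
  next
    fix B f Y assume a: "Q B f" "B \<subseteq> \<Omega>" "Y \<in> \<Omega>" "Y \<notin> B"
    have YS: "Y \<subseteq> S" using alg_sub[OF aO a(3)] .
    have "alg S B" "addv B f" "posv B f" using a(1) unfolding Q_def by auto
    from LM_step[OF this YS] obtain f' where
      o: "alg S (gen B Y)" "addv (gen B Y) f'" "posv (gen B Y) f'" "B \<subseteq> gen B Y" "Y \<in> gen B Y"
     "\<forall>X\<in>B. f' X = f X" by blast
    have "gen B Y \<subseteq> \<Omega>" using gen_sub[OF aO a(2,3)] .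
    thus "\<exists>B' f'. Q B' f' \<and> B' \<subseteq> \<Omega> \<and> Y \<in> B' \<and> B \<subseteq> B' \<and> (\<forall>X\<in>B. f' X = f X)"
      using o unfolding Q_def by blast
  qed
  then obtain B f where "Q B f" "B \<subseteq> \<Omega>" "\<Omega> \<subseteq> B" "\<forall>X\<in>B0. f X = m0 X" by blast
  hence "B = \<Omega>" "addv B f" "posv B f" unfolding Q_def by auto
  thus ?thesis using \<open>\<forall>X\<in>B0. f X = m0 X\<close> by blast
qed


lemma J_step:
  assumes ab: "alg S Bb" and am: "addv Bb m" and pm: "posv Bb m"
    and alg: "alg S B" and sub: "B \<subseteq> Bb" and af: "addv B \<phi>" and pf: "posv B \<phi>"
    and le: "\<forall>X\<in>B. \<phi> X \<le> m X" and D: "D \<in> Bb"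
  obtains \<phi>' where "alg S (gen B D)" "addv (gen B D) \<phi>'" "posv (gen B D) \<phi>'" "B \<subseteq> gen B D" "D \<in> gen B D"
     "\<forall>X\<in>B. \<phi>' X = \<phi> X" "\<forall>X\<in>gen B D. \<phi>' X \<le> m X"
proof -
  define P where "P = (\<lambda>G::'a set. True)"
  define h where "h = (\<lambda>G. \<phi> G - m (G - D))"
  define \<psi> where "\<psi> = (\<lambda>X. Sup {h G | G. G \<in> B \<and> G \<subseteq> X \<and> P G})"
  have DS: "D \<subseteq> S" using alg_sub[OF ab D] .
  have inBb: "X \<in> Bb" if "X \<in> B" for X using sub that by blast
  have e: "{} \<in> B" "P {}" using alg_empty[OF alg] unfolding P_def by auto
  have f0: "\<phi> {} = 0" using addv_empty[OF alg af] .
  have m0: "m {} = 0" using addv_empty[OF ab am] .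
  have mmono: "m X \<le> m Y" if "X \<in> Bb" "Y \<in> Bb" "X \<subseteq> Y" for X Y using addv_mono[OF ab am pm that] .
  have h0: "h {} = 0" unfolding h_def using f0 m0 by simp
  have ah: "addv B h" unfolding addv_def
  proof (intro ballI impI)
    fix G1 G2 assume G: "G1 \<in> B" "G2 \<in> B" "G1 \<inter> G2 = {}"
    have "\<phi> (G1 \<union> G2) = \<phi> G1 + \<phi> G2" using addvD[OF af G] .
    moreover have "m ((G1 \<union> G2) - D) = m (G1 - D) + m (G2 - D)"
    proof -
      have "(G1 \<union> G2) - D = (G1 - D) \<union> (G2 - D)" by blast
      moreover have "(G1 - D) \<inter> (G2 - D) = {}" using G(3) by blast
      ultimately show ?thesis using addvD[OF am alg_Diff[OF ab inBb[OF G(1)] D] alg_Diff[OF ab inBb[OF G(2)] D]] by simp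
    qed
    ultimately show "h (G1 \<union> G2) = h G1 + h G2" unfolding h_def by simp
  qed
  have hD: "h G \<le> m (G \<inter> D)" if "G \<in> B" for G
  proof -
    have "m G = m (G \<inter> D) + m (G - D)" using addv_split[OF ab am inBb[OF that] D] .
    thus ?thesis unfolding h_def using le that by force
  qed
  have bd: "\<forall>G\<in>B. P G \<longrightarrow> h G \<le> m S"
  proof (intro ballI impI)
    fix G assume G: "G \<in> B"
    have "m (G \<inter> D) \<le> m S" using mmono[OF alg_Int[OF ab inBb[OF G] D] alg_S[OF ab]] alg_sub[OF ab alg_Int[OF ab inBb[OF G] D]] by blast
    thus "h G \<le> m S" using hD[OF G] by simp
  qed
  have ap: "addv B \<psi>" unfolding \<psi>_def
    by (rule addv_supP[OF alg ah _ _ _ bd]) (auto simp: P_def)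
  have up: "h G \<le> \<psi> X" if "G \<in> B" "G \<subseteq> X" for G X
    unfolding \<psi>_def by (rule supP_upper[OF bd that]) (simp add: P_def)
  have pb: "\<forall>X\<in>B. 0 \<le> \<psi> X \<and> \<psi> X \<le> \<phi> X"
  proof
    fix X assume X: "X \<in> B"
    have "h {} \<le> \<psi> X" using up[OF e(1)] by blast
    moreover have "\<psi> X \<le> \<phi> X" unfolding \<psi>_def
    proof (rule supP_least[where P=P, OF e])
      fix G assume G: "G \<in> B" "G \<subseteq> X"
      have "\<phi> G \<le> \<phi> X" using addv_mono[OF alg af pf G(1) X G(2)] .
      moreover have "0 \<le> m (G - D)" using pm alg_Diff[OF ab inBb[OF G(1)] D] unfolding posv_def by blast
      ultimately show "h G \<le> \<phi> X" unfolding h_def by simp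
    qed
    ultimately show "0 \<le> \<psi> X \<and> \<psi> X \<le> \<phi> X" using h0 by simp
  qed
  have uD: "\<psi> X \<le> m (X \<inter> D)" if X: "X \<in> B" for X
    unfolding \<psi>_def
  proof (rule supP_least[where P=P, OF e])
    fix G assume G: "G \<in> B" "G \<subseteq> X"
    have "m (G \<inter> D) \<le> m (X \<inter> D)"
      using mmono[OF alg_Int[OF ab inBb[OF G(1)] D] alg_Int[OF ab inBb[OF X] D]] G(2) by blast
    thus "h G \<le> m (X \<inter> D)" using hD[OF G(1)] by simp
  qed
  have z: "\<forall>X\<in>B. X \<inter> D = {} \<longrightarrow> \<psi> X = 0"
  proof (intro ballI impI)
    fix X assume X: "X \<in> B" "X \<inter> D = {}"
    have "\<psi> X \<le> 0" using uD[OF X(1)] X(2) m0 by simp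
    thus "\<psi> X = 0" using pb X(1) by force
  qed
  have full: "\<forall>X\<in>B. X \<subseteq> D \<longrightarrow> \<psi> X = \<phi> X"
  proof (intro ballI impI)
    fix X assume X: "X \<in> B" "X \<subseteq> D"
    have "h X \<le> \<psi> X" using up[OF X(1)] by blast
    moreover have "X - D = {}" using X(2) by blast
    ultimately have "\<phi> X \<le> \<psi> X" unfolding h_def using m0 by simp
    thus "\<psi> X = \<phi> X" using pb X(1) by force
  qed
  obtain f' where o: "alg S (gen B D)" "addv (gen B D) f'" "posv (gen B D) f'" "B \<subseteq> gen B D" "D \<in> gen B D"
    and v: "\<And>X X'. X \<in> B \<Longrightarrow> X' \<in> B \<Longrightarrow> f' ((X \<inter> D) \<union> (X' - D)) = \<psi> X + (\<phi> X' - \<psi> X')"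
    using one_step'[OF alg DS af pf ap pb z full] by blast
  have ext: "\<forall>X\<in>B. f' X = \<phi> X"
  proof
    fix X assume X: "X \<in> B"
    have "X = (X \<inter> D) \<union> (X - D)" by blast
    hence "f' X = \<psi> X + (\<phi> X - \<psi> X)" using v[OF X X] by simp
    thus "f' X = \<phi> X" by simp
  qed
  have lem: "\<forall>H\<in>gen B D. f' H \<le> m H"
  proof
    fix H assume "H \<in> gen B D"
    then obtain X X' where X: "X \<in> B" "X' \<in> B" "H = (X \<inter> D) \<union> (X' - D)" by (rule gen_cases)
    have "m H = m (X \<inter> D) + m (X' - D)"
      unfolding X(3) by (rule addvD[OF am alg_Int[OF ab inBb[OF X(1)] D] alg_Diff[OF ab inBb[OF X(2)] D]]) blast
    moreover have "h X' \<le> \<psi> X'" using up[OF X(2)] by blast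
    ultimately show "f' H \<le> m H" using v[OF X(1,2)] uD[OF X(1)] X(3) unfolding h_def by simp
  qed
  show ?thesis using that[OF o ext lem] .
qed

lemma SW:
  assumes ab: "alg S Bb" and am: "addv Bb m" and pm: "posv Bb m"
    and a0: "alg S B0" and sub: "B0 \<subseteq> Bb" and af: "addv B0 \<phi>0" and pf: "posv B0 \<phi>0"
    and le: "\<forall>X\<in>B0. \<phi>0 X \<le> m X"
  shows "\<exists>\<phi>. addv Bb \<phi> \<and> posv Bb \<phi> \<and> (\<forall>X\<in>Bb. \<phi> X \<le> m X) \<and> (\<forall>X\<in>B0. \<phi> X = \<phi>0 X)"
proof -
  define Q where "Q = (\<lambda>B f. alg S B \<and> addv B f \<and> posv B f \<and> (\<forall>X\<in>B. f X \<le> m X))"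
  have "\<exists>B f. Q B f \<and> B \<subseteq> Bb \<and> Bb \<subseteq> B \<and> B0 \<subseteq> B \<and> (\<forall>X\<in>B0. f X = \<phi>0 X)"
  proof (rule zorn_ext[where Q = Q])
    show "Q B0 \<phi>0" unfolding Q_def using a0 af pf le by blast
    show "B0 \<subseteq> Bb" by fact
  next
    fix C :: "('a set set \<times> ('a set \<Rightarrow> real)) set"
    assume C: "C \<noteq> {}" "\<forall>p\<in>C. Q (fst p) (snd p) \<and> fst p \<subseteq> Bb" "lechain C"
    have "alg S (\<Union>(fst ` C)) \<and> addv (\<Union>(fst ` C)) (glue C) \<and> posv (\<Union>(fst ` C)) (glue C)"
      by (rule chain_Q3[OF C(1,3)]) (use C(2) in \<open>auto simp: Q_def\<close>)
    moreover have "\<forall>p\<in>C. \<forall>X\<in>fst p. snd p X \<le> m X" using C(2) unfolding Q_def by blast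
    hence "\<forall>X\<in>\<Union>(fst ` C). glue C X \<le> m X" using chain_pw[OF C(3), of "\<lambda>X r. r \<le> m X"] by blast
    ultimately show "Q (\<Union>(fst ` C)) (glue C)" unfolding Q_def by blast
  next
    fix B f Y assume a: "Q B f" "B \<subseteq> Bb" "Y \<in> Bb" "Y \<notin> B"
    have "alg S B" "addv B f" "posv B f" "\<forall>X\<in>B. f X \<le> m X" using a(1) unfolding Q_def by auto
    from J_step[OF ab am pm this(1) a(2) this(2,3,4) a(3)] obtain f' where
      o: "alg S (gen B Y)" "addv (gen B Y) f'" "posv (gen B Y) f'" "B \<subseteq> gen B Y" "Y \<in> gen B Y"
     "\<forall>X\<in>B. f' X = f X" "\<forall>X\<in>gen B Y. f' X \<le> m X" by blast
    have "gen B Y \<subseteq> Bb" using gen_sub[OF ab a(2,3)] .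
    thus "\<exists>B' f'. Q B' f' \<and> B' \<subseteq> Bb \<and> Y \<in> B' \<and> B \<subseteq> B' \<and> (\<forall>X\<in>B. f' X = f X)"
      using o unfolding Q_def by blast
  qed
  then obtain B f where "Q B f" "B \<subseteq> Bb" "Bb \<subseteq> B" "\<forall>X\<in>B0. f X = \<phi>0 X" by blast
  hence "B = Bb" "addv B f" "posv B f" "\<forall>X\<in>B. f X \<le> m X" unfolding Q_def by auto
  thus ?thesis using \<open>\<forall>X\<in>B0. f X = \<phi>0 X\<close> by blast
qed


lemma rinterp:
  assumes a2: "alg S A2" and aB: "alg S B"
    and ip: "\<forall>D\<in>B. \<forall>E\<in>A2. D \<subseteq> E \<longrightarrow> (\<exists>F\<in>B \<inter> A2. D \<subseteq> F \<and> F \<subseteq> E)"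
    and E: "E \<in> A2" and D: "D \<in> B" and sub: "E \<subseteq> D"
  shows "\<exists>F\<in>B \<inter> A2. E \<subseteq> F \<and> F \<subseteq> D"
proof -
  have "S - D \<subseteq> S - E" using sub by blast
  then obtain F where F: "F \<in> B \<inter> A2" "S - D \<subseteq> F" "F \<subseteq> S - E"
    using ip alg_compl[OF aB D] alg_compl[OF a2 E] by blast
  have "S - F \<in> B \<inter> A2" using F(1) alg_compl[OF aB] alg_compl[OF a2] by blast
  moreover have "E \<subseteq> S - F" "S - F \<subseteq> D" using F alg_sub[OF a2 E] alg_sub[OF aB D] by blast+
  ultimately show ?thesis by blast
qed

lemma amalg:
  assumes aA: "alg S A" and a1: "alg S A1" and a2: "alg S A2" and s1: "A1 \<subseteq> A" and s2: "A2 \<subseteq> A"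
    and am1: "addv A1 m1" and pm1: "posv A1 m1" and am2: "addv A2 m2" and pm2: "posv A2 m2"
    and agree: "\<forall>X\<in>A1 \<inter> A2. m1 X = m2 X"
    and interp: "\<forall>D\<in>A1. \<forall>E\<in>A2. D \<subseteq> E \<longrightarrow> (\<exists>F\<in>A1 \<inter> A2. D \<subseteq> F \<and> F \<subseteq> E)"
  shows "\<exists>\<omega>. addv A \<omega> \<and> posv A \<omega> \<and> (\<forall>X\<in>A1. \<omega> X = m1 X) \<and> (\<forall>X\<in>A2. \<omega> X = m2 X)"
proof -
  define Q where "Q = (\<lambda>B f. alg S B \<and> addv B f \<and> posv B f \<and> (\<forall>X\<in>B \<inter> A2. f X = m2 X)
      \<and> (\<forall>D\<in>B. \<forall>E\<in>A2. D \<subseteq> E \<longrightarrow> (\<exists>F\<in>B \<inter> A2. D \<subseteq> F \<and> F \<subseteq> E)))"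
  have m2mono: "m2 X \<le> m2 Y" if "X \<in> A2" "Y \<in> A2" "X \<subseteq> Y" for X Y using addv_mono[OF a2 am2 pm2 that] .
  have m20: "m2 {} = 0" using addv_empty[OF a2 am2] .
  have QD: "alg S B \<and> addv B f \<and> posv B f" "\<forall>X\<in>B \<inter> A2. f X = m2 X"
    "\<forall>D\<in>B. \<forall>E\<in>A2. D \<subseteq> E \<longrightarrow> (\<exists>F\<in>B \<inter> A2. D \<subseteq> F \<and> F \<subseteq> E)" if "Q B f" for B f
    using that unfolding Q_def by simp_all
  have QI: "Q B f" if "alg S B \<and> addv B f \<and> posv B f" "\<forall>X\<in>B \<inter> A2. f X = m2 X"
    "\<forall>D\<in>B. \<forall>E\<in>A2. D \<subseteq> E \<longrightarrow> (\<exists>F\<in>B \<inter> A2. D \<subseteq> F \<and> F \<subseteq> E)" for B f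
    using that unfolding Q_def by simp
  have "\<exists>B f. Q B f \<and> B \<subseteq> A \<and> A2 \<subseteq> B \<and> A1 \<subseteq> B \<and> (\<forall>X\<in>A1. f X = m1 X)"
  proof (rule zorn_ext[where Q = Q])
    show "Q A1 m1" by (rule QI) (use a1 am1 pm1 agree interp in auto)
    show "A1 \<subseteq> A" by fact
  next
    fix C :: "('a set set \<times> ('a set \<Rightarrow> real)) set"
    assume C: "C \<noteq> {}" "\<forall>p\<in>C. Q (fst p) (snd p) \<and> fst p \<subseteq> A" "lechain C"
    have CQ: "Q (fst p) (snd p)" if "p \<in> C" for p using C(2) that by blast
    have 1: "alg S (\<Union>(fst ` C)) \<and> addv (\<Union>(fst ` C)) (glue C) \<and> posv (\<Union>(fst ` C)) (glue C)"
      by (rule chain_Q3[OF C(1,3)]) (use QD(1)[OF CQ] in blast)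
    have "\<forall>p\<in>C. \<forall>X\<in>fst p. X \<in> A2 \<longrightarrow> snd p X = m2 X"
    proof (intro ballI impI)
      fix p X assume "p \<in> C" "X \<in> fst p" "X \<in> A2"
      thus "snd p X = m2 X" using QD(2)[OF CQ[OF \<open>p \<in> C\<close>]] by blast
    qed
    hence 2: "\<forall>X\<in>\<Union>(fst ` C) \<inter> A2. glue C X = m2 X"
      using chain_pw[OF C(3), of "\<lambda>X r. X \<in> A2 \<longrightarrow> r = m2 X"] by blast
    have 3: "\<forall>D\<in>\<Union>(fst ` C). \<forall>E\<in>A2. D \<subseteq> E \<longrightarrow> (\<exists>F\<in>\<Union>(fst ` C) \<inter> A2. D \<subseteq> F \<and> F \<subseteq> E)"
    proof (intro ballI impI)
      fix D E assume "D \<in> \<Union>(fst ` C)" "E \<in> A2" "D \<subseteq> E"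
      then obtain p where p: "p \<in> C" "D \<in> fst p" by blast
      have "\<forall>D\<in>fst p. \<forall>E\<in>A2. D \<subseteq> E \<longrightarrow> (\<exists>F\<in>fst p \<inter> A2. D \<subseteq> F \<and> F \<subseteq> E)"
        using QD(3)[OF CQ[OF p(1)]] .
      then obtain F where "F \<in> fst p \<inter> A2" "D \<subseteq> F" "F \<subseteq> E" using p(2) \<open>E \<in> A2\<close> \<open>D \<subseteq> E\<close> by blast
      thus "\<exists>F\<in>\<Union>(fst ` C) \<inter> A2. D \<subseteq> F \<and> F \<subseteq> E" using p(1) by blast
    qed
    show "Q (\<Union>(fst ` C)) (glue C)" using QI[OF 1 2 3] .
  next
    fix B \<omega> E assume a: "Q B \<omega>" "B \<subseteq> A" "E \<in> A2" "E \<notin> B"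
    have aB: "alg S B" and aw: "addv B \<omega>" and pw: "posv B \<omega>" and ag: "\<forall>X\<in>B \<inter> A2. \<omega> X = m2 X"
      and ip: "\<forall>D\<in>B. \<forall>E\<in>A2. D \<subseteq> E \<longrightarrow> (\<exists>F\<in>B \<inter> A2. D \<subseteq> F \<and> F \<subseteq> E)"
      using QD[OF a(1)] by auto
    have ES: "E \<subseteq> S" using alg_sub[OF a2 a(3)] .
    define B0 where "B0 = B \<inter> A2"
    have a0: "alg S B0" unfolding B0_def using alg_Int_alg[OF aB a2] .
    define \<phi>0 where "\<phi>0 = (\<lambda>F. m2 (F \<inter> E))"
    have inA2: "F \<inter> E \<in> A2" if "F \<in> B0" for F using alg_Int[OF a2 _ a(3)] that unfolding B0_def by blast
    have af0: "addv B0 \<phi>0" unfolding addv_def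
    proof (intro ballI impI)
      fix F1 F2 assume F: "F1 \<in> B0" "F2 \<in> B0" "F1 \<inter> F2 = {}"
      have "(F1 \<union> F2) \<inter> E = (F1 \<inter> E) \<union> (F2 \<inter> E)" by blast
      moreover have "(F1 \<inter> E) \<inter> (F2 \<inter> E) = {}" using F(3) by blast
      ultimately show "\<phi>0 (F1 \<union> F2) = \<phi>0 F1 + \<phi>0 F2"
        unfolding \<phi>0_def using addvD[OF am2 inA2[OF F(1)] inA2[OF F(2)]] by simp
    qed
    have pf0: "posv B0 \<phi>0" unfolding posv_def \<phi>0_def using pm2 inA2 unfolding posv_def by blast
    have le0: "\<forall>X\<in>B0. \<phi>0 X \<le> \<omega> X"
    proof
      fix X assume X: "X \<in> B0"
      have "m2 (X \<inter> E) \<le> m2 X" using m2mono[OF inA2[OF X]] X unfolding B0_def by blast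
      thus "\<phi>0 X \<le> \<omega> X" unfolding \<phi>0_def using ag X unfolding B0_def by simp
    qed
    obtain \<phi> where \<phi>: "addv B \<phi>" "posv B \<phi>" "\<forall>X\<in>B. \<phi> X \<le> \<omega> X" "\<forall>X\<in>B0. \<phi> X = \<phi>0 X"
      using SW[OF aB aw pw a0 _ af0 pf0 le0] unfolding B0_def by blast
    define g where "g = (\<lambda>X. \<omega> X - \<phi> X)"
    have ag': "addv B g" unfolding g_def using addv_diff_fun[OF aw \<phi>(1)] .
    have pg: "posv B g" unfolding g_def posv_def using \<phi>(3) by auto
    have z: "\<forall>X\<in>B. X \<inter> E = {} \<longrightarrow> \<phi> X = 0"
    proof (intro ballI impI)
      fix X assume X: "X \<in> B" "X \<inter> E = {}"
      have "X \<subseteq> S - E" using X alg_sub[OF aB X(1)] by blast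
      then obtain F where F: "F \<in> B \<inter> A2" "X \<subseteq> F" "F \<subseteq> S - E" using ip X(1) alg_compl[OF a2 a(3)] by blast
      have "\<phi> X \<le> \<phi> F" using addv_mono[OF aB \<phi>(1,2) X(1) _ F(2)] F(1) by blast
      moreover have "\<phi> F = m2 (F \<inter> E)" using \<phi>(4) F(1) unfolding B0_def \<phi>0_def by blast
      moreover have "F \<inter> E = {}" using F(3) by blast
      moreover have "0 \<le> \<phi> X" using \<phi>(2) X(1) unfolding posv_def by blast
      ultimately show "\<phi> X = 0" using m20 by simp
    qed
    have full: "\<forall>X\<in>B. X \<subseteq> E \<longrightarrow> \<phi> X = \<omega> X"
    proof (intro ballI impI)
      fix X assume X: "X \<in> B" "X \<subseteq> E"
      then obtain F where F: "F \<in> B \<inter> A2" "X \<subseteq> F" "F \<subseteq> E" using ip a(3) by blast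
      have "g X \<le> g F" using addv_mono[OF aB ag' pg X(1) _ F(2)] F(1) by blast
      moreover have "\<phi> F = m2 (F \<inter> E)" using \<phi>(4) F(1) unfolding B0_def \<phi>0_def by blast
      moreover have "\<omega> F = m2 F" using ag F(1) by blast
      moreover have "F \<inter> E = F" using F(3) by blast
      moreover have "0 \<le> g X" using pg X(1) unfolding posv_def by blast
      ultimately show "\<phi> X = \<omega> X" unfolding g_def by simp
    qed
    have pb: "\<forall>X\<in>B. 0 \<le> \<phi> X \<and> \<phi> X \<le> \<omega> X" using \<phi>(2,3) unfolding posv_def by blast
    obtain f' where o: "alg S (gen B E)" "addv (gen B E) f'" "posv (gen B E) f'" "B \<subseteq> gen B E" "E \<in> gen B E"
      and v: "\<And>X X'. X \<in> B \<Longrightarrow> X' \<in> B \<Longrightarrow> f' ((X \<inter> E) \<union> (X' - E)) = \<phi> X + (\<omega> X' - \<phi> X')"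
      using one_step'[OF aB ES aw pw \<phi>(1) pb z full] by blast
    have ext: "\<forall>X\<in>B. f' X = \<omega> X"
    proof
      fix X assume X: "X \<in> B"
      have "X = (X \<inter> E) \<union> (X - E)" by blast
      hence "f' X = \<phi> X + (\<omega> X - \<phi> X)" using v[OF X X] by simp
      thus "f' X = \<omega> X" by simp
    qed
    have agr: "\<forall>H\<in>gen B E \<inter> A2. f' H = m2 H"
    proof
      fix H assume H: "H \<in> gen B E \<inter> A2"
      then obtain X X' where X: "X \<in> B" "X' \<in> B" "H = (X \<inter> E) \<union> (X' - E)" by (blast elim: gen_cases)
      have HA: "H \<in> A2" using H by blast
      have c1: "X \<inter> E \<in> A2"
      proof -
        have "H \<inter> E = X \<inter> E" using X(3) by blast
        thus ?thesis using alg_Int[OF a2 HA a(3)] by simp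
      qed
      have c2: "X' - E \<in> A2"
      proof -
        have "H - E = X' - E" using X(3) by blast
        thus ?thesis using alg_Diff[OF a2 HA a(3)] by simp
      qed
      obtain F where F: "F \<in> B \<inter> A2" "X \<inter> E \<subseteq> F" "F \<subseteq> X"
        using rinterp[OF a2 aB ip c1 X(1)] by blast
      have "\<phi> X = \<phi> (X \<inter> F) + \<phi> (X - F)" using addv_split[OF aB \<phi>(1) X(1)] F(1) by blast
      moreover have "X \<inter> F = F" using F(3) by blast
      moreover have "\<phi> (X - F) = 0" using z alg_Diff[OF aB X(1)] F by blast
      moreover have "\<phi> F = m2 (F \<inter> E)" using \<phi>(4) F(1) unfolding B0_def \<phi>0_def by blast
      moreover have "F \<inter> E = X \<inter> E" using F by blast
      ultimately have e1: "\<phi> X = m2 (X \<inter> E)" by simp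
      obtain F' where F': "F' \<in> B \<inter> A2" "X' - E \<subseteq> F'" "F' \<subseteq> X'"
        using rinterp[OF a2 aB ip c2 X(2)] by blast
      have "g X' = g (X' \<inter> F') + g (X' - F')" using addv_split[OF aB ag' X(2)] F'(1) by blast
      moreover have "X' \<inter> F' = F'" using F'(3) by blast
      moreover have "g (X' - F') = 0"
      proof -
        have "X' - F' \<subseteq> E" using F' by blast
        thus ?thesis using full alg_Diff[OF aB X(2)] F'(1) unfolding g_def by auto
      qed
      moreover have "\<phi> F' = m2 (F' \<inter> E)" using \<phi>(4) F'(1) unfolding B0_def \<phi>0_def by blast
      moreover have "\<omega> F' = m2 F'" using ag F'(1) by blast
      moreover have "m2 F' = m2 (F' \<inter> E) + m2 (F' - E)" using addv_split[OF a2 am2 _ a(3)] F'(1) by blast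
      moreover have "F' - E = X' - E" using F' by blast
      ultimately have e2: "g X' = m2 (X' - E)" unfolding g_def by simp
      have "m2 H = m2 (X \<inter> E) + m2 (X' - E)"
        unfolding X(3) by (rule addvD[OF am2 c1 c2]) blast
      thus "f' H = m2 H" using v[OF X(1,2)] e1 e2 X(3) unfolding g_def by simp
    qed
    have ipn: "\<forall>D\<in>gen B E. \<forall>E2\<in>A2. D \<subseteq> E2 \<longrightarrow> (\<exists>F\<in>gen B E \<inter> A2. D \<subseteq> F \<and> F \<subseteq> E2)"
    proof (intro ballI impI)
      fix H E2 assume H: "H \<in> gen B E" "E2 \<in> A2" "H \<subseteq> E2"
      then obtain X X' where X: "X \<in> B" "X' \<in> B" "H = (X \<inter> E) \<union> (X' - E)" by (blast elim: gen_cases)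
      have u1: "E2 \<union> (S - E) \<in> A2" using alg_Un[OF a2 H(2) alg_compl[OF a2 a(3)]] .
      have u2: "E2 \<union> E \<in> A2" using alg_Un[OF a2 H(2) a(3)] .
      have "X \<subseteq> E2 \<union> (S - E)" using X H(3) alg_sub[OF aB X(1)] by blast
      then obtain F where F: "F \<in> B \<inter> A2" "X \<subseteq> F" "F \<subseteq> E2 \<union> (S - E)" using ip X(1) u1 by blast
      have "X' \<subseteq> E2 \<union> E" using X H(3) by blast
      then obtain F' where F': "F' \<in> B \<inter> A2" "X' \<subseteq> F'" "F' \<subseteq> E2 \<union> E" using ip X(2) u2 by blast
      define K where "K = (F \<inter> E) \<union> (F' - E)"
      have "K \<in> gen B E" unfolding K_def using gen_mem F(1) F'(1) by blast
      moreover have "K \<in> A2" unfolding K_def using alg_Un[OF a2 alg_Int[OF a2 _ a(3)] alg_Diff[OF a2 _ a(3)]] F(1) F'(1) by blast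
      moreover have "H \<subseteq> K" "K \<subseteq> E2" unfolding K_def using X(3) F F' by blast+
      ultimately show "\<exists>F\<in>gen B E \<inter> A2. H \<subseteq> F \<and> F \<subseteq> E2" by blast
    qed
    have "gen B E \<subseteq> A" using gen_sub[OF aA a(2) s2[THEN subsetD, OF a(3)]] .
    thus "\<exists>B' f'. Q B' f' \<and> B' \<subseteq> A \<and> E \<in> B' \<and> B \<subseteq> B' \<and> (\<forall>X\<in>B. f' X = \<omega> X)"
    proof (intro exI conjI)
      show "Q (gen B E) f'" using QI o(1,2,3) agr ipn by blast
    qed (use o ext in auto)
  qed
  then obtain B f where B: "Q B f" "B \<subseteq> A" "A2 \<subseteq> B" "A1 \<subseteq> B" "\<forall>X\<in>A1. f X = m1 X" by blast
  have aB: "alg S B" "addv B f" "posv B f" "\<forall>X\<in>A2. f X = m2 X" using QD[OF B(1)] B(3) by auto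
  obtain \<omega> where w: "addv A \<omega>" "posv A \<omega>" "\<forall>X\<in>B. \<omega> X = f X" using ext_K[OF aA aB(1) B(2) aB(2,3)] by blast
  show ?thesis using w B(3,4,5) aB(4) by (intro exI[of _ \<omega>]) auto
qed



lemma evt_cong: "(\<forall>i\<in>tvars t. e i = e' i) \<Longrightarrow> evt fn e t = evt fn e' t"
proof (induction t)
  case (Fn f ts)
  have "map (evt fn e) ts = map (evt fn e') ts" using Fn by (auto simp: map_eq_conv)
  thus ?case by (simp del: map_eq_conv)
qed auto

lemma sat_cong: "(\<forall>i\<in>fv \<phi>. e i = e' i) \<Longrightarrow> sat U rel fn e \<phi> = sat U rel fn e' \<phi>"
proof (induction \<phi> arbitrary: e e')
  case (Eq s t) thus ?case using evt_cong[of s e e' fn] evt_cong[of t e e' fn] by simp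
next
  case (Rl r ts)
  have "map (evt fn e) ts = map (evt fn e') ts" using Rl evt_cong[of _ e e' fn] by (auto simp: map_eq_conv)
  thus ?case by (simp del: map_eq_conv)
next
  case (Neg p) thus ?case by simp
next
  case (Conj p q)
  have "sat U rel fn e p = sat U rel fn e' p" using Conj.IH(1)[of e e'] Conj.prems by auto
  moreover have "sat U rel fn e q = sat U rel fn e' q" using Conj.IH(2)[of e e'] Conj.prems by auto
  ultimately show ?case by simp
next
  case (Ex i p)
  have "sat U rel fn (e(i := a)) p = sat U rel fn (e'(i := a)) p" for a
  proof -
    have "\<forall>j\<in>fv p. (e(i := a)) j = (e'(i := a)) j" using Ex.prems by auto
    thus ?thesis using Ex.IH by blast
  qed
  thus ?case by simp
qed

fun rnt :: "(nat \<Rightarrow> nat) \<Rightarrow> ('f, 'a) trm \<Rightarrow> ('f, 'a) trm" where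
  "rnt \<sigma> (Var i) = Var (\<sigma> i)"
| "rnt \<sigma> (Par a) = Par a"
| "rnt \<sigma> (Fn f ts) = Fn f (map (rnt \<sigma>) ts)"

fun rn :: "(nat \<Rightarrow> nat) \<Rightarrow> ('r, 'f, 'a) fm \<Rightarrow> ('r, 'f, 'a) fm" where
  "rn \<sigma> (Eq s t) = Eq (rnt \<sigma> s) (rnt \<sigma> t)"
| "rn \<sigma> (Rl r ts) = Rl r (map (rnt \<sigma>) ts)"
| "rn \<sigma> (Neg p) = Neg (rn \<sigma> p)"
| "rn \<sigma> (Conj p q) = Conj (rn \<sigma> p) (rn \<sigma> q)"
| "rn \<sigma> (Ex i p) = Ex (\<sigma> i) (rn \<sigma> p)"

lemma evt_rnt: "evt fn e (rnt \<sigma> t) = evt fn (\<lambda>i. e (\<sigma> i)) t"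
proof (induction t)
  case (Fn f ts)
  have "map (evt fn e \<circ> rnt \<sigma>) ts = map (evt fn (\<lambda>i. e (\<sigma> i))) ts" using Fn by (auto simp: map_eq_conv comp_def)
  thus ?case by (simp del: map_eq_conv)
qed auto

lemma tparams_rnt: "tparams (rnt \<sigma> t) = tparams t"
  by (induction t) auto

lemma tvars_rnt: "tvars (rnt \<sigma> t) = \<sigma> ` tvars t"
  by (induction t) auto

lemma params_rn: "params (rn \<sigma> \<phi>) = params \<phi>"
  by (induction \<phi>) (auto simp: tparams_rnt)

lemma fv_rn: "inj \<sigma> \<Longrightarrow> fv (rn \<sigma> \<phi>) = \<sigma> ` fv \<phi>"
proof (induction \<phi>)
  case (Ex i p) thus ?case by (auto simp: inj_eq)
qed (auto simp: tvars_rnt)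

lemma sat_rn: "inj \<sigma> \<Longrightarrow> sat U rel fn e (rn \<sigma> \<phi>) = sat U rel fn (\<lambda>i. e (\<sigma> i)) \<phi>"
proof (induction \<phi> arbitrary: e)
  case (Eq s t) thus ?case by (simp add: evt_rnt del: comp_apply)
next
  case (Rl r ts)
  have "map (evt fn e \<circ> rnt \<sigma>) ts = map (evt fn (\<lambda>i. e (\<sigma> i))) ts" by (auto simp: map_eq_conv evt_rnt)
  thus ?case by (simp del: map_eq_conv)
next
  case (Neg p) thus ?case by simp
next
  case (Conj p q) thus ?case by simp
next
  case (Ex i p)
  have eq: "(\<lambda>j. (e(\<sigma> i := a)) (\<sigma> j)) = (\<lambda>j. e (\<sigma> j))(i := a)" for a
    using Ex.prems by (auto simp: fun_eq_iff inj_eq)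
  have "sat U rel fn e (rn \<sigma> (Ex i p)) = (\<exists>a\<in>U. sat U rel fn (e(\<sigma> i := a)) (rn \<sigma> p))" by simp
  also have "\<dots> = (\<exists>a\<in>U. sat U rel fn (\<lambda>j. (e(\<sigma> i := a)) (\<sigma> j)) p)" by (simp only: Ex.IH[OF Ex.prems])
  also have "\<dots> = (\<exists>a\<in>U. sat U rel fn ((\<lambda>j. e (\<sigma> j))(i := a)) p)" by (simp only: eq)
  also have "\<dots> = sat U rel fn (\<lambda>j. e (\<sigma> j)) (Ex i p)" by simp
  finally show ?case .
qed

fun exs :: "nat list \<Rightarrow> ('r, 'f, 'a) fm \<Rightarrow> ('r, 'f, 'a) fm" where
  "exs [] \<phi> = \<phi>"
| "exs (i # is) \<phi> = Ex i (exs is \<phi>)"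

lemma fv_exs: "fv (exs vs \<phi>) = fv \<phi> - set vs"
  by (induction vs) auto

lemma params_exs: "params (exs vs \<phi>) = params \<phi>"
  by (induction vs) auto

lemma sat_exs:
  "sat U rel fn e (exs [k..<k+l] \<phi>) \<longleftrightarrow>
     (\<exists>u\<in>tuples U l. sat U rel fn (\<lambda>i. if k \<le> i \<and> i < k + l then u ! (i - k) else e i) \<phi>)"
proof (induction l arbitrary: k e)
  case 0
  have "(\<lambda>i. if k \<le> i \<and> i < k + 0 then u ! (i - k) else e i) = e" for u :: "'a list" by (rule ext) auto
  thus ?case by (simp add: tuples_def)
next
  case (Suc l)
  have up: "[k..<k + Suc l] = k # [Suc k..<Suc k + l]" by (simp add: upt_rec)
  have envs: "(\<lambda>i. if Suc k \<le> i \<and> i < Suc k + l then u ! (i - Suc k) else (e(k := a)) i)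
      = (\<lambda>i. if k \<le> i \<and> i < k + Suc l then (a # u) ! (i - k) else e i)" for a u
  proof
    fix i show "(if Suc k \<le> i \<and> i < Suc k + l then u ! (i - Suc k) else (e(k := a)) i)
      = (if k \<le> i \<and> i < k + Suc l then (a # u) ! (i - k) else e i)"
    proof (cases "i = k")
      case False
      thus ?thesis by (cases "Suc k \<le> i") (auto simp: Suc_diff_Suc[symmetric] nth_Cons')
    qed simp
  qed
  have "sat U rel fn e (exs [k..<k+Suc l] \<phi>) \<longleftrightarrow>
     (\<exists>a\<in>U. \<exists>u\<in>tuples U l. sat U rel fn (\<lambda>i. if k \<le> i \<and> i < k + Suc l then (a # u) ! (i - k) else e i) \<phi>)"
    by (simp only: up exs.simps sat.simps Suc.IH envs)
  also have "\<dots> \<longleftrightarrow> (\<exists>u\<in>tuples U (Suc l). sat U rel fn (\<lambda>i. if k \<le> i \<and> i < k + Suc l then u ! (i - k) else e i) \<phi>)"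
  proof
    assume "\<exists>a\<in>U. \<exists>u\<in>tuples U l. sat U rel fn (\<lambda>i. if k \<le> i \<and> i < k + Suc l then (a # u) ! (i - k) else e i) \<phi>"
    then obtain a u where "a \<in> U" "u \<in> tuples U l" "sat U rel fn (\<lambda>i. if k \<le> i \<and> i < k + Suc l then (a # u) ! (i - k) else e i) \<phi>" by blast
    moreover have "a # u \<in> tuples U (Suc l)" using calculation unfolding tuples_def by auto
    ultimately show "\<exists>u\<in>tuples U (Suc l). sat U rel fn (\<lambda>i. if k \<le> i \<and> i < k + Suc l then u ! (i - k) else e i) \<phi>" by blast
  next
    assume "\<exists>u\<in>tuples U (Suc l). sat U rel fn (\<lambda>i. if k \<le> i \<and> i < k + Suc l then u ! (i - k) else e i) \<phi>"
    then obtain w where w: "w \<in> tuples U (Suc l)" "sat U rel fn (\<lambda>i. if k \<le> i \<and> i < k + Suc l then w ! (i - k) else e i) \<phi>" by blast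
    then obtain a u where au: "w = a # u" unfolding tuples_def by (cases w) auto
    have "a \<in> U" "u \<in> tuples U l" using w(1) au unfolding tuples_def by auto
    thus "\<exists>a\<in>U. \<exists>u\<in>tuples U l. sat U rel fn (\<lambda>i. if k \<le> i \<and> i < k + Suc l then (a # u) ! (i - k) else e i) \<phi>"
      using w(2) au by blast
  qed
  finally show ?case .
qed


lemma dset_sub: "dset U rel fn k \<phi> \<subseteq> tuples U k"
  unfolding dset_def by blast

lemma LL_sub: "D \<in> LL U rel fn C k \<Longrightarrow> D \<subseteq> tuples U k"
  unfolding LL_def using dset_sub by blast

lemma LL_mono: "C \<subseteq> C' \<Longrightarrow> LL U rel fn C k \<subseteq> LL U rel fn C' k"
  unfolding LL_def by blast

lemma LL_alg:
  fixes rel :: "'r \<Rightarrow> 'a list \<Rightarrow> bool" and fn :: "'f \<Rightarrow> 'a list \<Rightarrow> 'a"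
  assumes "U \<noteq> {}"
  shows "alg (tuples U k) (LL U rel fn C k)"
  unfolding alg_def
proof (intro conjI ballI)
  show "LL U rel fn C k \<subseteq> Pow (tuples U k)" using LL_sub by blast
  define T :: "('r, 'f, 'a) fm" where "T = Ex 0 (Eq (Var 0) (Var 0))"
  have "dset U rel fn k T = tuples U k" unfolding dset_def T_def using assms by auto
  moreover have "params T \<subseteq> C" "fv T \<subseteq> {..<k}" unfolding T_def by auto
  ultimately show "tuples U k \<in> LL U rel fn C k" unfolding LL_def by blast
next
  fix X assume "X \<in> LL U rel fn C k"
  then obtain \<phi> where \<phi>: "X = dset U rel fn k \<phi>" "params \<phi> \<subseteq> C" "fv \<phi> \<subseteq> {..<k}" unfolding LL_def by blast
  have "tuples U k - X = dset U rel fn k (Neg \<phi>)" unfolding \<phi>(1) dset_def by auto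
  moreover have "params (Neg \<phi>) \<subseteq> C" "fv (Neg \<phi>) \<subseteq> {..<k}" using \<phi> by auto
  ultimately show "tuples U k - X \<in> LL U rel fn C k" unfolding LL_def by blast
next
  fix X Y assume "X \<in> LL U rel fn C k" "Y \<in> LL U rel fn C k"
  then obtain \<phi> \<psi> where \<phi>: "X = dset U rel fn k \<phi>" "params \<phi> \<subseteq> C" "fv \<phi> \<subseteq> {..<k}"
    and \<psi>: "Y = dset U rel fn k \<psi>" "params \<psi> \<subseteq> C" "fv \<psi> \<subseteq> {..<k}" unfolding LL_def by blast
  have "X \<inter> Y = dset U rel fn k (Conj \<phi> \<psi>)" unfolding \<phi>(1) \<psi>(1) dset_def by auto
  moreover have "params (Conj \<phi> \<psi>) \<subseteq> C" "fv (Conj \<phi> \<psi>) \<subseteq> {..<k}" using \<phi> \<psi> by auto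
  ultimately show "X \<inter> Y \<in> LL U rel fn C k" unfolding LL_def by blast
qed

lemma ext_x_LL:
  assumes "D \<in> LL U rel fn C n"
  shows "ext_x U n m D \<in> LL U rel fn C (n + m)"
proof -
  obtain \<phi> where \<phi>: "D = dset U rel fn n \<phi>" "params \<phi> \<subseteq> C" "fv \<phi> \<subseteq> {..<n}" using assms unfolding LL_def by blast
  have "ext_x U n m D = dset U rel fn (n + m) \<phi>"
  proof (intro set_eqI iffI)
    fix v assume "v \<in> ext_x U n m D"
    hence v: "v \<in> tuples U (n + m)" "sat U rel fn (\<lambda>i. take n v ! i) \<phi>" unfolding ext_x_def \<phi>(1) dset_def by auto
    have "\<forall>i\<in>fv \<phi>. take n v ! i = v ! i" using \<phi>(3) by auto
    hence "sat U rel fn (\<lambda>i. v ! i) \<phi>" using v(2) sat_cong[of \<phi> "\<lambda>i. take n v ! i" "\<lambda>i. v ! i"] by blast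
    thus "v \<in> dset U rel fn (n + m) \<phi>" using v(1) unfolding dset_def by auto
  next
    fix v assume "v \<in> dset U rel fn (n + m) \<phi>"
    hence v: "v \<in> tuples U (n + m)" "sat U rel fn (\<lambda>i. v ! i) \<phi>" unfolding dset_def by auto
    have "\<forall>i\<in>fv \<phi>. take n v ! i = v ! i" using \<phi>(3) by auto
    hence "sat U rel fn (\<lambda>i. take n v ! i) \<phi>" using v(2) sat_cong[of \<phi> "\<lambda>i. take n v ! i" "\<lambda>i. v ! i"] by blast
    moreover have "take n v \<in> tuples U n" using v(1) unfolding tuples_def by (auto dest: in_set_takeD)
    ultimately show "v \<in> ext_x U n m D" using v(1) unfolding ext_x_def \<phi>(1) dset_def by auto
  qed
  moreover have "fv \<phi> \<subseteq> {..<n + m}" using \<phi>(3) by auto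
  ultimately show ?thesis using \<phi>(2) unfolding LL_def by blast
qed

lemma ext_y_LL:
  assumes "D \<in> LL U rel fn C m"
  shows "ext_y U n m D \<in> LL U rel fn C (n + m)"
proof -
  obtain \<phi> where \<phi>: "D = dset U rel fn m \<phi>" "params \<phi> \<subseteq> C" "fv \<phi> \<subseteq> {..<m}" using assms unfolding LL_def by blast
  define \<sigma> where "\<sigma> = (\<lambda>i::nat. i + n)"
  have inj: "inj \<sigma>" unfolding \<sigma>_def by (rule injI) simp
  have key: "sat U rel fn (\<lambda>i. v ! i) (rn \<sigma> \<phi>) = sat U rel fn (\<lambda>i. drop n v ! i) \<phi>" if "length v = n + m" for v
  proof -
    have "sat U rel fn (\<lambda>i. v ! i) (rn \<sigma> \<phi>) = sat U rel fn (\<lambda>i. v ! (\<sigma> i)) \<phi>" using sat_rn[OF inj] .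
    also have "\<dots> = sat U rel fn (\<lambda>i. drop n v ! i) \<phi>"
      by (rule sat_cong) (use that in \<open>auto simp: \<sigma>_def add.commute\<close>)
    finally show ?thesis .
  qed
  have "ext_y U n m D = dset U rel fn (n + m) (rn \<sigma> \<phi>)"
  proof (intro set_eqI iffI)
    fix v assume "v \<in> ext_y U n m D"
    hence v: "v \<in> tuples U (n + m)" "sat U rel fn (\<lambda>i. drop n v ! i) \<phi>" unfolding ext_y_def \<phi>(1) dset_def by auto
    have "length v = n + m" using v(1) unfolding tuples_def by auto
    hence "sat U rel fn (\<lambda>i. v ! i) (rn \<sigma> \<phi>)" using key[of v] v(2) by blast
    thus "v \<in> dset U rel fn (n + m) (rn \<sigma> \<phi>)" using v(1) unfolding dset_def by blast
  next
    fix v assume "v \<in> dset U rel fn (n + m) (rn \<sigma> \<phi>)"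
    hence v: "v \<in> tuples U (n + m)" "sat U rel fn (\<lambda>i. v ! i) (rn \<sigma> \<phi>)" unfolding dset_def by auto
    have "drop n v \<in> tuples U m" using v(1) unfolding tuples_def by (auto dest: in_set_dropD)
    moreover have "length v = n + m" using v(1) unfolding tuples_def by auto
    hence "sat U rel fn (\<lambda>i. drop n v ! i) \<phi>" using key[of v] v(2) by blast
    ultimately show "v \<in> ext_y U n m D" using v(1) unfolding ext_y_def \<phi>(1) dset_def by blast
  qed
  moreover have "fv (rn \<sigma> \<phi>) \<subseteq> {..<n + m}" using fv_rn[OF inj, of \<phi>] \<phi>(3) unfolding \<sigma>_def by auto
  moreover have "params (rn \<sigma> \<phi>) \<subseteq> C" using params_rn \<phi>(2) by metis
  ultimately show ?thesis unfolding LL_def by blast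
qed


lemma proj_x_LL:
  assumes "D \<in> LL U rel fn C (n + m)"
  shows "take n ` D \<in> LL U rel fn C n"
proof -
  obtain \<phi> where \<phi>: "D = dset U rel fn (n + m) \<phi>" "params \<phi> \<subseteq> C" "fv \<phi> \<subseteq> {..<n + m}"
    using assms unfolding LL_def by blast
  define \<psi> where "\<psi> = exs [n..<n+m] \<phi>"
  have fvp: "fv \<psi> \<subseteq> {..<n}" unfolding \<psi>_def fv_exs using \<phi>(3) by auto
  have pp: "params \<psi> \<subseteq> C" unfolding \<psi>_def params_exs using \<phi>(2) .
  have env: "sat U rel fn (\<lambda>i. if n \<le> i \<and> i < n + m then u ! (i - n) else w ! i) \<phi>
           = sat U rel fn (\<lambda>i. (w @ u) ! i) \<phi>" if "length w = n" for w u :: "'a list"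
    by (rule sat_cong) (use that \<phi>(3) in \<open>auto simp: nth_append\<close>)
  have "take n ` D = dset U rel fn n \<psi>"
  proof (intro set_eqI iffI)
    fix w assume "w \<in> take n ` D"
    then obtain v where v: "v \<in> D" "w = take n v" by blast
    have vt: "v \<in> tuples U (n + m)" "sat U rel fn (\<lambda>i. v ! i) \<phi>" using v(1) unfolding \<phi>(1) dset_def by auto
    have lw: "length w = n" using vt(1) v(2) unfolding tuples_def by auto
    have vs: "v = w @ drop n v" using v(2) by simp
    have dt: "drop n v \<in> tuples U m" using vt(1) unfolding tuples_def by (auto dest: in_set_dropD)
    have wt: "w \<in> tuples U n" using vt(1) v(2) lw unfolding tuples_def by (auto dest: in_set_takeD)
    have "sat U rel fn (\<lambda>i. (w @ drop n v) ! i) \<phi>" using vt(2) vs by simp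
    hence "sat U rel fn (\<lambda>i. if n \<le> i \<and> i < n + m then drop n v ! (i - n) else w ! i) \<phi>"
      using env[OF lw] by blast
    hence "sat U rel fn (\<lambda>i. w ! i) \<psi>" unfolding \<psi>_def sat_exs using dt by blast
    thus "w \<in> dset U rel fn n \<psi>" using wt unfolding dset_def by blast
  next
    fix w assume "w \<in> dset U rel fn n \<psi>"
    hence w: "w \<in> tuples U n" "sat U rel fn (\<lambda>i. w ! i) \<psi>" unfolding dset_def by auto
    have lw: "length w = n" using w(1) unfolding tuples_def by auto
    obtain u where u: "u \<in> tuples U m" "sat U rel fn (\<lambda>i. if n \<le> i \<and> i < n + m then u ! (i - n) else w ! i) \<phi>"
      using w(2) unfolding \<psi>_def sat_exs by blast
    have "sat U rel fn (\<lambda>i. (w @ u) ! i) \<phi>" using u(2) env[OF lw] by blast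
    moreover have "w @ u \<in> tuples U (n + m)" using w(1) u(1) unfolding tuples_def by auto
    ultimately have "w @ u \<in> D" unfolding \<phi>(1) dset_def by blast
    moreover have "take n (w @ u) = w" using lw by simp
    ultimately show "w \<in> take n ` D" by force
  qed
  thus ?thesis using fvp pp unfolding LL_def by blast
qed


lemma proj_y_LL:
  assumes "D \<in> LL U rel fn C (n + m)"
  shows "drop n ` D \<in> LL U rel fn C m"
proof -
  obtain \<phi> where \<phi>: "D = dset U rel fn (n + m) \<phi>" "params \<phi> \<subseteq> C" "fv \<phi> \<subseteq> {..<n + m}"
    using assms unfolding LL_def by blast
  define \<sigma> where "\<sigma> = (\<lambda>i::nat. if i < n then i + m else if i < n + m then i - n else i)"
  have inj: "inj \<sigma>" unfolding \<sigma>_def by (rule injI) (auto split: if_splits)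
  define \<psi> where "\<psi> = exs [m..<m+n] (rn \<sigma> \<phi>)"
  have fvp: "fv \<psi> \<subseteq> {..<m}"
  proof
    fix j assume "j \<in> fv \<psi>"
    hence j: "j \<in> \<sigma> ` fv \<phi>" "j \<notin> {m..<m+n}" unfolding \<psi>_def fv_exs fv_rn[OF inj] by auto
    then obtain i where "i \<in> fv \<phi>" "j = \<sigma> i" by blast
    thus "j \<in> {..<m}" using j(2) \<phi>(3) unfolding \<sigma>_def by (auto split: if_splits)
  qed
  have pp: "params \<psi> \<subseteq> C" unfolding \<psi>_def params_exs params_rn using \<phi>(2) .
  have env: "sat U rel fn (\<lambda>i. if m \<le> i \<and> i < m + n then u ! (i - m) else w ! i) (rn \<sigma> \<phi>)
           = sat U rel fn (\<lambda>i. (u @ w) ! i) \<phi>" if "length w = m" "length u = n" for w u :: "'a list"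
  proof -
    have "sat U rel fn (\<lambda>i. if m \<le> i \<and> i < m + n then u ! (i - m) else w ! i) (rn \<sigma> \<phi>)
        = sat U rel fn (\<lambda>j. if m \<le> \<sigma> j \<and> \<sigma> j < m + n then u ! (\<sigma> j - m) else w ! \<sigma> j) \<phi>"
      using sat_rn[OF inj] .
    also have "\<dots> = sat U rel fn (\<lambda>i. (u @ w) ! i) \<phi>"
      by (rule sat_cong) (use that \<phi>(3) in \<open>auto simp: nth_append \<sigma>_def\<close>)
    finally show ?thesis .
  qed
  have "drop n ` D = dset U rel fn m \<psi>"
  proof (intro set_eqI iffI)
    fix w assume "w \<in> drop n ` D"
    then obtain v where v: "v \<in> D" "w = drop n v" by blast
    have vt: "v \<in> tuples U (n + m)" "sat U rel fn (\<lambda>i. v ! i) \<phi>" using v(1) unfolding \<phi>(1) dset_def by auto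
    have lw: "length w = m" using vt(1) v(2) unfolding tuples_def by auto
    have vs: "v = take n v @ w" using v(2) by simp
    have tt: "take n v \<in> tuples U n" using vt(1) unfolding tuples_def by (auto dest: in_set_takeD)
    hence lt: "length (take n v) = n" unfolding tuples_def by auto
    have wt: "w \<in> tuples U m" using vt(1) v(2) lw unfolding tuples_def by (auto dest: in_set_dropD)
    have "sat U rel fn (\<lambda>i. (take n v @ w) ! i) \<phi>" using vt(2) vs by simp
    hence "sat U rel fn (\<lambda>i. if m \<le> i \<and> i < m + n then take n v ! (i - m) else w ! i) (rn \<sigma> \<phi>)"
      using env[OF lw lt] by blast
    hence "sat U rel fn (\<lambda>i. w ! i) \<psi>" unfolding \<psi>_def sat_exs using tt by blast
    thus "w \<in> dset U rel fn m \<psi>" using wt unfolding dset_def by blast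
  next
    fix w assume "w \<in> dset U rel fn m \<psi>"
    hence w: "w \<in> tuples U m" "sat U rel fn (\<lambda>i. w ! i) \<psi>" unfolding dset_def by auto
    have lw: "length w = m" using w(1) unfolding tuples_def by auto
    obtain u where u: "u \<in> tuples U n" "sat U rel fn (\<lambda>i. if m \<le> i \<and> i < m + n then u ! (i - m) else w ! i) (rn \<sigma> \<phi>)"
      using w(2) unfolding \<psi>_def sat_exs by blast
    have lu: "length u = n" using u(1) unfolding tuples_def by auto
    have "sat U rel fn (\<lambda>i. (u @ w) ! i) \<phi>" using u(2) env[OF lw lu] by blast
    moreover have "u @ w \<in> tuples U (n + m)" using w(1) u(1) unfolding tuples_def by auto
    ultimately have "u @ w \<in> D" unfolding \<phi>(1) dset_def by blast
    moreover have "drop n (u @ w) = w" using lu by simp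
    ultimately show "w \<in> drop n ` D" by force
  qed
  thus ?thesis using fvp pp unfolding LL_def by blast
qed


definition pre :: "('b \<Rightarrow> 'b) \<Rightarrow> 'b set \<Rightarrow> 'b set \<Rightarrow> 'b set" where
  "pre t S D = {v \<in> S. t v \<in> D}"

lemma ext_x_pre: "ext_x U n m D = pre (take n) (tuples U (n + m)) D"
  unfolding ext_x_def pre_def ..

lemma ext_y_pre: "ext_y U n m D = pre (drop n) (tuples U (n + m)) D"
  unfolding ext_y_def pre_def ..

lemma pull_alg:
  assumes "alg S' B'" "\<forall>v\<in>S. t v \<in> S'"
  shows "alg S (pre t S ` B')"
  unfolding alg_def
proof (intro conjI ballI)
  show "pre t S ` B' \<subseteq> Pow S" unfolding pre_def by blast
  have "pre t S S' = S" unfolding pre_def using assms(2) by blast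
  thus "S \<in> pre t S ` B'" using alg_S[OF assms(1)] by force
next
  fix X assume "X \<in> pre t S ` B'"
  then obtain D where D: "D \<in> B'" "X = pre t S D" by blast
  have "S - X = pre t S (S' - D)" unfolding D(2) pre_def using assms(2) by blast
  thus "S - X \<in> pre t S ` B'" using alg_compl[OF assms(1) D(1)] by blast
next
  fix X Y assume "X \<in> pre t S ` B'" "Y \<in> pre t S ` B'"
  then obtain D E where D: "D \<in> B'" "X = pre t S D" "E \<in> B'" "Y = pre t S E" by blast
  have "X \<inter> Y = pre t S (D \<inter> E)" unfolding D(2,4) pre_def by blast
  thus "X \<inter> Y \<in> pre t S ` B'" using alg_Int[OF assms(1) D(1,3)] by blast
qed

lemma push_img: "t ` S = S' \<Longrightarrow> D \<subseteq> S' \<Longrightarrow> t ` pre t S D = D"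
  unfolding pre_def by blast

lemma push_addv:
  assumes ts: "t ` S = S'" and al: "alg S' B'" and ad: "addv B' \<mu>"
  shows "addv (pre t S ` B') (\<lambda>E. \<mu> (t ` E))"
  unfolding addv_def
proof (intro ballI impI)
  fix X Y assume "X \<in> pre t S ` B'" "Y \<in> pre t S ` B'" and dj: "X \<inter> Y = {}"
  then obtain D E where D: "D \<in> B'" "X = pre t S D" "E \<in> B'" "Y = pre t S E" by blast
  have DS: "D \<subseteq> S'" "E \<subseteq> S'" using alg_sub[OF al] D by auto
  have "D \<inter> E = {}"
  proof (rule ccontr)
    assume "D \<inter> E \<noteq> {}"
    then obtain w where "w \<in> D" "w \<in> E" by blast
    then obtain v where "v \<in> S" "t v = w" using DS ts by blast
    hence "v \<in> X \<inter> Y" using \<open>w \<in> D\<close> \<open>w \<in> E\<close> unfolding D(2,4) pre_def by blast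
    thus False using dj by blast
  qed
  moreover have "t ` (X \<union> Y) = D \<union> E" using push_img[OF ts DS(1)] push_img[OF ts DS(2)] D(2,4) by (simp add: image_Un)
  moreover have "t ` X = D" "t ` Y = E" using push_img[OF ts DS(1)] push_img[OF ts DS(2)] D(2,4) by auto
  ultimately show "\<mu> (t ` (X \<union> Y)) = \<mu> (t ` X) + \<mu> (t ` Y)" using addvD[OF ad D(1,3)] by simp
qed

lemma push_posv:
  assumes ts: "t ` S = S'" and al: "alg S' B'" and ps: "posv B' \<mu>"
  shows "posv (pre t S ` B') (\<lambda>E. \<mu> (t ` E))"
  unfolding posv_def
proof
  fix X assume "X \<in> pre t S ` B'"
  then obtain D where D: "D \<in> B'" "X = pre t S D" by blast
  have "t ` X = D" using push_img[OF ts alg_sub[OF al D(1)]] D(2) by simp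
  thus "0 \<le> \<mu> (t ` X)" using ps D(1) unfolding posv_def by simp
qed

lemma pull_addv:
  assumes ad: "addv A \<omega>" and sub: "pre t S ` B' \<subseteq> A"
  shows "addv B' (\<lambda>D. \<omega> (pre t S D))"
  unfolding addv_def
proof (intro ballI impI)
  fix D E assume D: "D \<in> B'" "E \<in> B'" "D \<inter> E = {}"
  have "pre t S (D \<union> E) = pre t S D \<union> pre t S E" "pre t S D \<inter> pre t S E = {}"
    unfolding pre_def using D(3) by blast+
  moreover have "pre t S D \<in> A" "pre t S E \<in> A" using sub D(1,2) by blast+
  ultimately show "\<omega> (pre t S (D \<union> E)) = \<omega> (pre t S D) + \<omega> (pre t S E)"
    using addvD[OF ad] by simp
qed

lemma addv_cong: "addv B f \<Longrightarrow> (\<forall>X\<in>B. f X = g X) \<Longrightarrow> alg S B \<Longrightarrow> addv B g"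
  unfolding addv_def using alg_Un by metis

lemma addv_sub: "addv A f \<Longrightarrow> B \<subseteq> A \<Longrightarrow> addv B f"
  unfolding addv_def by blast

lemma posv_sub: "posv A f \<Longrightarrow> B \<subseteq> A \<Longrightarrow> posv B f"
  unfolding posv_def by blast

lemma MM_D:
  assumes "\<mu> \<in> MM U rel fn C k"
  shows "addv (LL U rel fn C k) \<mu>" "posv (LL U rel fn C k) \<mu>" "\<mu> (tuples U k) = 1"
    "\<And>D. D \<notin> LL U rel fn C k \<Longrightarrow> \<mu> D = 0"
  using assms unfolding MM_def fa_prob_def addv_def posv_def by auto

lemma MM_I:
  assumes "addv (LL U rel fn C k) \<mu>" "posv (LL U rel fn C k) \<mu>" "\<mu> (tuples U k) = 1"
    "\<And>D. D \<notin> LL U rel fn C k \<Longrightarrow> \<mu> D = 0"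
  shows "\<mu> \<in> MM U rel fn C k"
  using assms unfolding MM_def fa_prob_def addv_def posv_def by auto

lemma restr_MM:
  assumes "U \<noteq> {}" "addv (LL U rel fn C k) \<omega>" "posv (LL U rel fn C k) \<omega>" "\<omega> (tuples U k) = 1"
  shows "restr (LL U rel fn C k) \<omega> \<in> MM U rel fn C k"
proof (rule MM_I)
  have "tuples U k \<in> LL U rel fn C k" using alg_S[OF LL_alg[OF assms(1)]] .
  thus "restr (LL U rel fn C k) \<omega> (tuples U k) = 1" unfolding restr_def using assms(4) by simp
  show "addv (LL U rel fn C k) (restr (LL U rel fn C k) \<omega>)"
    unfolding addv_def
  proof (intro ballI impI)
    fix X Y assume XY: "X \<in> LL U rel fn C k" "Y \<in> LL U rel fn C k" "X \<inter> Y = {}"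
    have "X \<union> Y \<in> LL U rel fn C k" using alg_Un[OF LL_alg[OF assms(1)] XY(1,2)] .
    thus "restr (LL U rel fn C k) \<omega> (X \<union> Y) = restr (LL U rel fn C k) \<omega> X + restr (LL U rel fn C k) \<omega> Y"
      using addvD[OF assms(2) XY] XY unfolding restr_def by simp
  qed
  show "posv (LL U rel fn C k) (restr (LL U rel fn C k) \<omega>)"
    using assms(3) unfolding posv_def restr_def by auto
  show "\<And>D. D \<notin> LL U rel fn C k \<Longrightarrow> restr (LL U rel fn C k) \<omega> D = 0" unfolding restr_def by simp
qed

lemma take_tuples: "U \<noteq> {} \<Longrightarrow> take n ` tuples U (n + m) = tuples U n"
proof (intro set_eqI iffI)
  fix w assume "w \<in> take n ` tuples U (n + m)"
  thus "w \<in> tuples U n" unfolding tuples_def by (auto dest: in_set_takeD)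
next
  fix w assume U: "U \<noteq> {}" and w: "w \<in> tuples U n"
  then obtain a where a: "a \<in> U" by blast
  have "w @ replicate m a \<in> tuples U (n + m)" using w a unfolding tuples_def by auto
  moreover have "take n (w @ replicate m a) = w" using w unfolding tuples_def by auto
  ultimately show "w \<in> take n ` tuples U (n + m)" by force
qed

lemma drop_tuples: "U \<noteq> {} \<Longrightarrow> drop n ` tuples U (n + m) = tuples U m"
proof (intro set_eqI iffI)
  fix w assume "w \<in> drop n ` tuples U (n + m)"
  thus "w \<in> tuples U m" unfolding tuples_def by (auto dest: in_set_dropD)
next
  fix w assume U: "U \<noteq> {}" and w: "w \<in> tuples U m"
  then obtain a where a: "a \<in> U" by blast
  have "replicate n a @ w \<in> tuples U (n + m)" using w a unfolding tuples_def by auto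
  moreover have "drop n (replicate n a @ w) = w" by simp
  ultimately show "w \<in> drop n ` tuples U (n + m)" by force
qed

lemma small_Un:
  assumes "monster \<kappa> U rel fn" "small \<kappa> U A" "small \<kappa> U B"
  shows "small \<kappa> U (A \<union> B)"
proof -
  have co: "Card_order \<kappa>" and nl: "(natLeq, \<kappa>) \<in> ordLeq" using assms(1) unfolding monster_def by auto
  have inf: "\<not> finite (Field \<kappa>)"
  proof
    assume "finite (Field \<kappa>)"
    hence "(card_of (Field \<kappa>), natLeq) \<in> ordLess" using finite_iff_ordLess_natLeq by blast
    moreover have "(\<kappa>, card_of (Field \<kappa>)) \<in> ordIso" using card_of_Field_ordIso[OF co] ordIso_symmetric by blast
    ultimately have "(\<kappa>, natLeq) \<in> ordLess" using ordIso_ordLess_trans by blast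
    thus False using nl not_ordLess_ordLeq by blast
  qed
  show ?thesis using assms(2,3) card_of_Un_ordLess_infinite_Field[OF inf co] unfolding small_def by blast
qed


lemma amalg_app:
  fixes rel :: "'r \<Rightarrow> 'a list \<Rightarrow> bool" and fn :: "'f \<Rightarrow> 'a list \<Rightarrow> 'a"
  assumes U: "U \<noteq> {}" and CU: "C \<subseteq> U"
    and ts: "t ` tuples U (n + m) = tuples U k"
    and hproj: "\<forall>D\<in>LL U rel fn C (n + m). t ` D \<in> LL U rel fn C k"
    and hextU: "\<forall>D\<in>LL U rel fn U k. pre t (tuples U (n + m)) D \<in> LL U rel fn U (n + m)"
    and hextC: "\<forall>D\<in>LL U rel fn C k. pre t (tuples U (n + m)) D \<in> LL U rel fn C (n + m)"
    and am1: "addv (LL U rel fn C (n + m)) m1" and pm1: "posv (LL U rel fn C (n + m)) m1"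
    and mu2: "\<mu>2 \<in> MM U rel fn U k"
    and agree: "\<forall>D\<in>LL U rel fn C k. m1 (pre t (tuples U (n + m)) D) = \<mu>2 D"
  shows "\<exists>\<omega>. addv (LL U rel fn U (n + m)) \<omega> \<and> posv (LL U rel fn U (n + m)) \<omega>
     \<and> (\<forall>X\<in>LL U rel fn C (n + m). \<omega> X = m1 X)
     \<and> (\<forall>D\<in>LL U rel fn U k. \<omega> (pre t (tuples U (n + m)) D) = \<mu>2 D)"
proof -
  let ?S = "tuples U (n + m)"
  let ?S' = "tuples U k"
  let ?A = "LL U rel fn U (n + m)"
  let ?A1 = "LL U rel fn C (n + m)"
  let ?A2 = "pre t ?S ` LL U rel fn U k"
  define m2 where "m2 = (\<lambda>E. \<mu>2 (t ` E))"
  have maps: "\<forall>v\<in>?S. t v \<in> ?S'" using ts by blast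
  have aA: "alg ?S ?A" using LL_alg[OF U] .
  have a1: "alg ?S ?A1" using LL_alg[OF U] .
  have aS': "alg ?S' (LL U rel fn U k)" using LL_alg[OF U] .
  have a2: "alg ?S ?A2" using pull_alg[OF aS' maps] .
  have s1: "?A1 \<subseteq> ?A" using LL_mono[OF CU] .
  have s2: "?A2 \<subseteq> ?A" using hextU by blast
  have am2: "addv ?A2 m2" unfolding m2_def using push_addv[OF ts aS' MM_D(1)[OF mu2]] .
  have pm2: "posv ?A2 m2" unfolding m2_def using push_posv[OF ts aS' MM_D(2)[OF mu2]] .
  have img: "t ` pre t ?S D = D" if "D \<in> LL U rel fn U k" for D using push_img[OF ts LL_sub[OF that]] .
  have ag: "\<forall>X\<in>?A1 \<inter> ?A2. m1 X = m2 X"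
  proof
    fix X assume X: "X \<in> ?A1 \<inter> ?A2"
    then obtain D where D: "D \<in> LL U rel fn U k" "X = pre t ?S D" by blast
    have "t ` X = D" using img[OF D(1)] D(2) by simp
    hence "D \<in> LL U rel fn C k" using hproj X by blast
    thus "m1 X = m2 X" using agree D(2) \<open>t ` X = D\<close> unfolding m2_def by simp
  qed
  have ip: "\<forall>D\<in>?A1. \<forall>E\<in>?A2. D \<subseteq> E \<longrightarrow> (\<exists>F\<in>?A1 \<inter> ?A2. D \<subseteq> F \<and> F \<subseteq> E)"
  proof (intro ballI impI)
    fix D E assume D: "D \<in> ?A1" and E: "E \<in> ?A2" and DE: "D \<subseteq> E"
    obtain D2 where D2: "D2 \<in> LL U rel fn U k" "E = pre t ?S D2" using E by blast
    have tD: "t ` D \<in> LL U rel fn C k" using hproj D by blast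
    hence tDU: "t ` D \<in> LL U rel fn U k" using LL_mono[OF CU] by blast
    define F where "F = pre t ?S (t ` D)"
    have "F \<in> ?A1" unfolding F_def using hextC tD by blast
    moreover have "F \<in> ?A2" unfolding F_def using tDU by blast
    moreover have "D \<subseteq> F" unfolding F_def pre_def using LL_sub[OF D] by blast
    moreover have "F \<subseteq> E"
    proof -
      have "t ` D \<subseteq> t ` E" using DE by blast
      also have "t ` E = D2" using img[OF D2(1)] D2(2) by simp
      finally show ?thesis unfolding F_def D2(2) pre_def by blast
    qed
    ultimately show "\<exists>F\<in>?A1 \<inter> ?A2. D \<subseteq> F \<and> F \<subseteq> E" by blast
  qed
  obtain \<omega> where w: "addv ?A \<omega>" "posv ?A \<omega>" "\<forall>X\<in>?A1. \<omega> X = m1 X" "\<forall>X\<in>?A2. \<omega> X = m2 X"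
    using amalg[OF aA a1 a2 s1 s2 am1 pm1 am2 pm2 ag ip] by blast
  have "\<forall>D\<in>LL U rel fn U k. \<omega> (pre t ?S D) = \<mu>2 D"
  proof
    fix D assume D: "D \<in> LL U rel fn U k"
    have "\<omega> (pre t ?S D) = m2 (pre t ?S D)" using w(4) D by blast
    thus "\<omega> (pre t ?S D) = \<mu>2 D" unfolding m2_def using img[OF D] by simp
  qed
  thus ?thesis using w by blast
qed


theorem proposition4p8:
  fixes \<kappa> :: "'k rel"
    and U :: "'a set"
    and rel :: "'r \<Rightarrow> 'a list \<Rightarrow> bool"
    and fn :: "'f \<Rightarrow> 'a list \<Rightarrow> 'a"
    and n m :: nat
    and \<mu> \<nu> :: "'a list set \<Rightarrow> real"
  assumes "monster \<kappa> U rel fn"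
    and "\<mu> \<in> MM U rel fn U n"
    and "\<nu> \<in> MM U rel fn U m"
    and "E_above \<kappa> U rel fn n m \<mu> \<nu>"
    and "smooth \<kappa> U rel fn n \<mu>"
  shows "smooth \<kappa> U rel fn m \<nu>"
proof -
  note mon = assms(1) and muM = assms(2) and nuM = assms(3)
  have U: "U \<noteq> {}" using mon unfolding monster_def is_structure_def by blast
  obtain A lam where A: "small \<kappa> U A" and lamM: "lam \<in> MM U rel fn A (n + m)"
    and lamx: "pi_x U rel fn A n m lam = restr (LL U rel fn A n) \<mu>"
    and H: "\<forall>\<omega>\<in>MM U rel fn U (n + m). restr (LL U rel fn A (n + m)) \<omega> = lam \<and> pi_x U rel fn U n m \<omega> = \<mu>
              \<longrightarrow> pi_y U rel fn U n m \<omega> = \<nu>"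
    using assms(4) unfolding E_above_def E_above_over_def by blast
  obtain B where B: "small \<kappa> U B" and smB: "smooth_over U rel fn B n \<mu>"
    using assms(5) unfolding smooth_def by blast
  define C where "C = A \<union> B"
  have C: "small \<kappa> U C" unfolding C_def using small_Un[OF mon A B] .
  have AU: "A \<subseteq> U" and BU: "B \<subseteq> U" and CU: "C \<subseteq> U" using A B C unfolding small_def by auto
  let ?S = "tuples U (n + m)"
  have agree1: "\<forall>D\<in>LL U rel fn A n. lam (pre (take n) ?S D) = \<mu> D"
  proof
    fix D assume D: "D \<in> LL U rel fn A n"
    have "pi_x U rel fn A n m lam D = lam (ext_x U n m D)" unfolding pi_x_def using D by simp
    moreover have "restr (LL U rel fn A n) \<mu> D = \<mu> D" unfolding restr_def using D by simp
    ultimately show "lam (pre (take n) ?S D) = \<mu> D" using lamx ext_x_pre by metis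
  qed
  have "\<exists>\<omega>. addv (LL U rel fn U (n + m)) \<omega> \<and> posv (LL U rel fn U (n + m)) \<omega>
     \<and> (\<forall>X\<in>LL U rel fn A (n + m). \<omega> X = lam X)
     \<and> (\<forall>D\<in>LL U rel fn U n. \<omega> (pre (take n) ?S D) = \<mu> D)"
  proof (rule amalg_app[OF U AU take_tuples[OF U]])
    show "\<forall>D\<in>LL U rel fn A (n + m). take n ` D \<in> LL U rel fn A n" using proj_x_LL by blast
    show "\<forall>D\<in>LL U rel fn U n. pre (take n) ?S D \<in> LL U rel fn U (n + m)" using ext_x_LL ext_x_pre by metis
    show "\<forall>D\<in>LL U rel fn A n. pre (take n) ?S D \<in> LL U rel fn A (n + m)" using ext_x_LL ext_x_pre by metis
    show "addv (LL U rel fn A (n + m)) lam" "posv (LL U rel fn A (n + m)) lam" using MM_D[OF lamM] by auto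
    show "\<mu> \<in> MM U rel fn U n" by fact
    show "\<forall>D\<in>LL U rel fn A n. lam (pre (take n) ?S D) = \<mu> D" by fact
  qed
  then obtain \<omega> where w: "addv (LL U rel fn U (n + m)) \<omega>" "posv (LL U rel fn U (n + m)) \<omega>"
     "\<forall>X\<in>LL U rel fn A (n + m). \<omega> X = lam X"
     "\<forall>D\<in>LL U rel fn U n. \<omega> (pre (take n) ?S D) = \<mu> D" by blast
  define \<omega>1 where "\<omega>1 = restr (LL U rel fn U (n + m)) \<omega>"
  have SA: "?S \<in> LL U rel fn A (n + m)" using alg_S[OF LL_alg[OF U]] .
  have LAU: "LL U rel fn A (n + m) \<subseteq> LL U rel fn U (n + m)" using LL_mono[OF AU] .
  have LCU: "LL U rel fn C (n + m) \<subseteq> LL U rel fn U (n + m)" using LL_mono[OF CU] .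
  have wS: "\<omega> ?S = 1" using w(3) SA MM_D(3)[OF lamM] by simp
  have w1M: "\<omega>1 \<in> MM U rel fn U (n + m)" unfolding \<omega>1_def using restr_MM[OF U w(1,2) wS] .
  have w1A: "restr (LL U rel fn A (n + m)) \<omega>1 = lam"
  proof
    fix X show "restr (LL U rel fn A (n + m)) \<omega>1 X = lam X"
    proof (cases "X \<in> LL U rel fn A (n + m)")
      case True thus ?thesis unfolding restr_def \<omega>1_def using LAU w(3) by auto
    next
      case False thus ?thesis unfolding restr_def using MM_D(4)[OF lamM] by simp
    qed
  qed
  have w1x: "pi_x U rel fn U n m \<omega>1 = \<mu>"
  proof
    fix D show "pi_x U rel fn U n m \<omega>1 D = \<mu> D"
    proof (cases "D \<in> LL U rel fn U n")
      case True
      have "ext_x U n m D \<in> LL U rel fn U (n + m)" using ext_x_LL[OF True] .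
      thus ?thesis unfolding pi_x_def \<omega>1_def restr_def using True w(4) ext_x_pre by metis
    next
      case False thus ?thesis unfolding pi_x_def using MM_D(4)[OF muM] by simp
    qed
  qed
  have w1y: "pi_y U rel fn U n m \<omega>1 = \<nu>" using H w1M w1A w1x by blast
  have w1C: "\<omega>1 X = \<omega> X" if "X \<in> LL U rel fn U (n + m)" for X unfolding \<omega>1_def restr_def using that by simp
  have "smooth_over U rel fn C m \<nu>"
    unfolding smooth_over_def
  proof (intro conjI ballI impI)
    show "\<nu> \<in> MM U rel fn U m" by fact
    fix \<nu>' assume nu'M: "\<nu>' \<in> MM U rel fn U m" and eqC: "restr (LL U rel fn C m) \<nu>' = restr (LL U rel fn C m) \<nu>"
    have agree2: "\<forall>D\<in>LL U rel fn C m. \<omega>1 (pre (drop n) ?S D) = \<nu>' D"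
    proof
      fix D assume D: "D \<in> LL U rel fn C m"
      have DU: "D \<in> LL U rel fn U m" using LL_mono[OF CU] D by blast
      have "pi_y U rel fn U n m \<omega>1 D = \<omega>1 (ext_y U n m D)" unfolding pi_y_def using DU by simp
      moreover have "restr (LL U rel fn C m) \<nu>' D = \<nu>' D" "restr (LL U rel fn C m) \<nu> D = \<nu> D"
        unfolding restr_def using D by auto
      ultimately show "\<omega>1 (pre (drop n) ?S D) = \<nu>' D" using w1y eqC ext_y_pre by metis
    qed
    have am1: "addv (LL U rel fn C (n + m)) \<omega>1" using addv_sub[OF MM_D(1)[OF w1M] LCU] .
    have pm1: "posv (LL U rel fn C (n + m)) \<omega>1" using posv_sub[OF MM_D(2)[OF w1M] LCU] .
    have "\<exists>\<omega>. addv (LL U rel fn U (n + m)) \<omega> \<and> posv (LL U rel fn U (n + m)) \<omega>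
       \<and> (\<forall>X\<in>LL U rel fn C (n + m). \<omega> X = \<omega>1 X)
       \<and> (\<forall>D\<in>LL U rel fn U m. \<omega> (pre (drop n) ?S D) = \<nu>' D)"
    proof (rule amalg_app[OF U CU drop_tuples[OF U]])
      show "\<forall>D\<in>LL U rel fn C (n + m). drop n ` D \<in> LL U rel fn C m" using proj_y_LL by blast
      show "\<forall>D\<in>LL U rel fn U m. pre (drop n) ?S D \<in> LL U rel fn U (n + m)" using ext_y_LL ext_y_pre by metis
      show "\<forall>D\<in>LL U rel fn C m. pre (drop n) ?S D \<in> LL U rel fn C (n + m)" using ext_y_LL ext_y_pre by metis
    qed fact+
    then obtain \<omega>' where w': "addv (LL U rel fn U (n + m)) \<omega>'" "posv (LL U rel fn U (n + m)) \<omega>'"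
       "\<forall>X\<in>LL U rel fn C (n + m). \<omega>' X = \<omega>1 X"
       "\<forall>D\<in>LL U rel fn U m. \<omega>' (pre (drop n) ?S D) = \<nu>' D" by blast
    define \<omega>2 where "\<omega>2 = restr (LL U rel fn U (n + m)) \<omega>'"
    have SC: "?S \<in> LL U rel fn C (n + m)" using alg_S[OF LL_alg[OF U]] .
    have w'S: "\<omega>' ?S = 1" using w'(3) SC MM_D(3)[OF w1M] by simp
    have w2M: "\<omega>2 \<in> MM U rel fn U (n + m)" unfolding \<omega>2_def using restr_MM[OF U w'(1,2) w'S] .
    have w2C: "\<omega>2 X = \<omega>1 X" if "X \<in> LL U rel fn C (n + m)" for X
      unfolding \<omega>2_def restr_def using that LCU w'(3) by auto
    have extx: "ext_x U n m D \<in> LL U rel fn U (n + m)" if "D \<in> LL U rel fn U n" for D using ext_x_LL[OF that] .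
    have px2M: "pi_x U rel fn U n m \<omega>2 \<in> MM U rel fn U n"
    proof (rule MM_I)
      have "addv (LL U rel fn U n) (\<lambda>D. \<omega>2 (pre (take n) ?S D))"
        by (rule pull_addv[OF MM_D(1)[OF w2M]]) (use extx in \<open>auto simp: ext_x_pre\<close>)
      thus "addv (LL U rel fn U n) (pi_x U rel fn U n m \<omega>2)"
        by (rule addv_cong[OF _ _ LL_alg[OF U]]) (simp add: pi_x_def ext_x_pre)
      show "posv (LL U rel fn U n) (pi_x U rel fn U n m \<omega>2)"
        using MM_D(2)[OF w2M] extx unfolding posv_def pi_x_def by auto
      have "ext_x U n m (tuples U n) = ?S" unfolding ext_x_def tuples_def by (auto dest: in_set_takeD)
      moreover have "tuples U n \<in> LL U rel fn U n" using alg_S[OF LL_alg[OF U]] .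
      moreover have "\<omega>2 ?S = 1" using MM_D(3)[OF w2M] .
      ultimately show "pi_x U rel fn U n m \<omega>2 (tuples U n) = 1" unfolding pi_x_def by simp
      show "\<And>D. D \<notin> LL U rel fn U n \<Longrightarrow> pi_x U rel fn U n m \<omega>2 D = 0" unfolding pi_x_def by simp
    qed
    have "restr (LL U rel fn B n) (pi_x U rel fn U n m \<omega>2) = restr (LL U rel fn B n) \<mu>"
    proof
      fix D show "restr (LL U rel fn B n) (pi_x U rel fn U n m \<omega>2) D = restr (LL U rel fn B n) \<mu> D"
      proof (cases "D \<in> LL U rel fn B n")
        case True
        have DU: "D \<in> LL U rel fn U n" using LL_mono[OF BU] True by blast
        have DC: "D \<in> LL U rel fn C n" using LL_mono[of B C] True unfolding C_def by blast
        have "pi_x U rel fn U n m \<omega>2 D = \<omega>2 (ext_x U n m D)" unfolding pi_x_def using DU by simp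
        also have "\<dots> = \<omega>1 (ext_x U n m D)" using w2C ext_x_LL[OF DC] by blast
        also have "\<dots> = pi_x U rel fn U n m \<omega>1 D" unfolding pi_x_def using DU by simp
        also have "\<dots> = \<mu> D" using w1x by simp
        finally show ?thesis unfolding restr_def using True by simp
      next
        case False thus ?thesis unfolding restr_def by simp
      qed
    qed
    hence px2: "pi_x U rel fn U n m \<omega>2 = \<mu>" using smB px2M unfolding smooth_over_def by blast
    have w2A: "restr (LL U rel fn A (n + m)) \<omega>2 = lam"
    proof
      fix X show "restr (LL U rel fn A (n + m)) \<omega>2 X = lam X"
      proof (cases "X \<in> LL U rel fn A (n + m)")
        case True
        have XC: "X \<in> LL U rel fn C (n + m)" using LL_mono[of A C] True unfolding C_def by blast
        have "restr (LL U rel fn A (n + m)) \<omega>1 X = lam X" using w1A by simp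
        thus ?thesis unfolding restr_def using True w2C[OF XC] by simp
      next
        case False thus ?thesis unfolding restr_def using MM_D(4)[OF lamM] by simp
      qed
    qed
    have py2: "pi_y U rel fn U n m \<omega>2 = \<nu>" using H w2M w2A px2 by blast
    have "pi_y U rel fn U n m \<omega>2 = \<nu>'"
    proof
      fix D show "pi_y U rel fn U n m \<omega>2 D = \<nu>' D"
      proof (cases "D \<in> LL U rel fn U m")
        case True
        have "ext_y U n m D \<in> LL U rel fn U (n + m)" using ext_y_LL[OF True] .
        thus ?thesis unfolding pi_y_def \<omega>2_def restr_def using True w'(4) ext_y_pre by metis
      next
        case False thus ?thesis unfolding pi_y_def using MM_D(4)[OF nu'M] by simp
      qed
    qed
    thus "\<nu>' = \<nu>" using py2 by simp
  qed
  thus ?thesis unfolding smooth_def using C by blast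
qed

end
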